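(* Let $p$ be a prime and let $G$ be a non-abelian, non-metacyclic group of order $p^3$. Then there exist at least $p+1$ pairwise non-isomorphic local nearrings whose additive group is isomorphic to $G$.
   Context: A (left) nearring is a set $R$ with two binary operations $+$ and $\cdot$ such that $(R,+)$ is a group (not necessarily abelian) with neutral element $0$, $(R,\cdot)$ is a semigroup, and $x\cdot(y+z)=x\cdot y+x\cdot z$ for all $x,y,z\in R$. A nearring with identity is one where $(R,\cdot)$ is a monoid. A nearring $R$ with identity is called local if the set $L$ of all non-invertible elements of $(R,\cdot)$ is a subgroup of $(R,+)$. The additive group of $R$ is $(R,+)$. Two nearrings are isomorphic if there is a bijection preserving both operations. *)

theory Defs
  imports "HOL-Algebra.Algebra"
begin

definition metacyclic :: "('a, 'b) monoid_scheme \<Rightarrow> bool" where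
  "metacyclic G \<longleftrightarrow>
     (\<exists>N. N \<lhd> G \<and> cyclic_group (G\<lparr>carrier := N\<rparr>) \<and> cyclic_group (G Mod N))"

definition nearring :: "('a, 'b) ring_scheme \<Rightarrow> bool" where
  "nearring R \<longleftrightarrow>
     group (add_monoid R) \<and>
     (\<forall>x\<in>carrier R. \<forall>y\<in>carrier R. x \<otimes>\<^bsub>R\<^esub> y \<in> carrier R) \<and>
     (\<forall>x\<in>carrier R. \<forall>y\<in>carrier R. \<forall>z\<in>carrier R.
        (x \<otimes>\<^bsub>R\<^esub> y) \<otimes>\<^bsub>R\<^esub> z = x \<otimes>\<^bsub>R\<^esub> (y \<otimes>\<^bsub>R\<^esub> z)) \<and>
     (\<forall>x\<in>carrier R. \<forall>y\<in>carrier R. \<forall>z\<in>carrier R.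
        x \<otimes>\<^bsub>R\<^esub> (y \<oplus>\<^bsub>R\<^esub> z) = (x \<otimes>\<^bsub>R\<^esub> y) \<oplus>\<^bsub>R\<^esub> (x \<otimes>\<^bsub>R\<^esub> z))"

definition nearring_with_identity :: "('a, 'b) ring_scheme \<Rightarrow> bool" where
  "nearring_with_identity R \<longleftrightarrow> nearring R \<and> monoid R"

definition local_nearring :: "('a, 'b) ring_scheme \<Rightarrow> bool" where
  "local_nearring R \<longleftrightarrow> nearring_with_identity R \<and>
     subgroup (carrier R - Units R) (add_monoid R)"

definition nearring_iso :: "('a, 'b) ring_scheme \<Rightarrow> ('c, 'd) ring_scheme \<Rightarrow> bool" where
  "nearring_iso R S \<longleftrightarrow> (\<exists>f. bij_betw f (carrier R) (carrier S) \<and>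
     (\<forall>x\<in>carrier R. \<forall>y\<in>carrier R.
        f (x \<oplus>\<^bsub>R\<^esub> y) = f x \<oplus>\<^bsub>S\<^esub> f y \<and> f (x \<otimes>\<^bsub>R\<^esub> y) = f x \<otimes>\<^bsub>S\<^esub> f y))"

end

theory Submission
  imports Defs "HOL-Number_Theory.Residue_Primitive_Roots"
begin


type_synonym tri = "int \<times> int \<times> int"

fun red :: "int \<Rightarrow> tri \<Rightarrow> tri" where
  "red q (a,b,c) = (a mod q, b mod q, c mod q)"

fun sadd0 :: "int \<Rightarrow> tri \<Rightarrow> tri \<Rightarrow> tri" where
  "sadd0 q (a,b,c) (a',b',c') = (a+a', b+b', c+ c'+((q+1) div 2)*(a'*b - a*b'))"

fun mu0 :: "nat \<Rightarrow> bool \<Rightarrow> tri \<Rightarrow> tri \<Rightarrow> tri" where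
  "mu0 k s (x1,x2,x3) (y1,y2,y3) = (x1*y1, x2*y1 + x1^k*y2,
      x3*y1 + (if s then x1*x2*y2 else 0) + x1*x1^k*y3)"

definition sadd :: "int \<Rightarrow> tri \<Rightarrow> tri \<Rightarrow> tri" where
  "sadd q x y = red q (sadd0 q x y)"

definition mu :: "int \<Rightarrow> nat \<Rightarrow> bool \<Rightarrow> tri \<Rightarrow> tri \<Rightarrow> tri" where
  "mu q k s x y = red q (mu0 k s x y)"

definition TT :: "int \<Rightarrow> tri set" where
  "TT q = {0..<q} \<times> {0..<q} \<times> {0..<q}"

lemma red_eq_iff: "red q (a,b,c) = red q (a',b',c') \<longleftrightarrow> [a = a'] (mod q) \<and> [b = b'] (mod q) \<and> [c = c'] (mod q)"
  by (simp add: cong_def)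

lemma red_red: "red q (red q x) = red q x"
  by (cases x) simp

lemma red_TT: "q > 0 \<Longrightarrow> red q x \<in> TT q"
  by (cases x) (simp add: TT_def)

lemma red_id: "x \<in> TT q \<Longrightarrow> red q x = x"
  by (cases x) (auto simp: TT_def)

lemma sadd_TT: "q > 0 \<Longrightarrow> sadd q x y \<in> TT q"
  by (simp add: sadd_def red_TT)

lemma mu_TT: "q > 0 \<Longrightarrow> mu q k s x y \<in> TT q"
  by (simp add: mu_def red_TT)

lemma mu0_cong:
  assumes "red q x = red q x'" "red q y = red q y'"
  shows "red q (mu0 k s x y) = red q (mu0 k s x' y')"
proof -
  obtain x1 x2 x3 where x: "x = (x1,x2,x3)" by (cases x) auto
  obtain y1 y2 y3 where y: "y = (y1,y2,y3)" by (cases y) auto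
  obtain x1' x2' x3' where x': "x' = (x1',x2',x3')" by (cases x') auto
  obtain y1' y2' y3' where y': "y' = (y1',y2',y3')" by (cases y') auto
  from assms have h: "[x1 = x1'] (mod q)" "[x2 = x2'] (mod q)" "[x3 = x3'] (mod q)"
     "[y1 = y1'] (mod q)" "[y2 = y2'] (mod q)" "[y3 = y3'] (mod q)"
    unfolding x y x' y' red_eq_iff by auto
  show ?thesis unfolding x y x' y' mu0.simps red_eq_iff
    by (cases s) (simp_all, (intro conjI cong_add cong_mult cong_pow h cong_refl)+)
qed

lemma sadd0_cong:
  assumes "red q x = red q x'" "red q y = red q y'"
  shows "red q (sadd0 q x y) = red q (sadd0 q x' y')"
proof -
  obtain x1 x2 x3 where x: "x = (x1,x2,x3)" by (cases x) auto
  obtain y1 y2 y3 where y: "y = (y1,y2,y3)" by (cases y) auto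
  obtain x1' x2' x3' where x': "x' = (x1',x2',x3')" by (cases x') auto
  obtain y1' y2' y3' where y': "y' = (y1',y2',y3')" by (cases y') auto
  from assms have h: "[x1 = x1'] (mod q)" "[x2 = x2'] (mod q)" "[x3 = x3'] (mod q)"
     "[y1 = y1'] (mod q)" "[y2 = y2'] (mod q)" "[y3 = y3'] (mod q)"
    unfolding x y x' y' red_eq_iff by auto
  show ?thesis unfolding x y x' y' sadd0.simps red_eq_iff
    by (intro conjI cong_add cong_mult cong_diff h cong_refl)+
qed

lemma mu0_red_l: "red q (mu0 k s (red q x) y) = red q (mu0 k s x y)"
  by (rule mu0_cong) (simp_all add: red_red)
lemma mu0_red_r: "red q (mu0 k s x (red q y)) = red q (mu0 k s x y)"
  by (rule mu0_cong) (simp_all add: red_red)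
lemma sadd0_red_l: "red q (sadd0 q (red q x) y) = red q (sadd0 q x y)"
  by (rule sadd0_cong) (simp_all add: red_red)
lemma sadd0_red_r: "red q (sadd0 q x (red q y)) = red q (sadd0 q x y)"
  by (rule sadd0_cong) (simp_all add: red_red)

lemma mu_ldist: "mu q k s x (sadd q y w) = sadd q (mu q k s x y) (mu q k s x w)"
proof -
  obtain x1 x2 x3 where x: "x = (x1,x2,x3)" by (cases x) auto
  obtain y1 y2 y3 where y: "y = (y1,y2,y3)" by (cases y) auto
  obtain w1 w2 w3 where w: "w = (w1,w2,w3)" by (cases w) auto
  have "mu q k s x (sadd q y w) = red q (mu0 k s x (sadd0 q y w))"
    by (simp add: mu_def sadd_def mu0_red_r)
  also have "mu0 k s x (sadd0 q y w) = sadd0 q (mu0 k s x y) (mu0 k s x w)"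
    unfolding x y w by (simp add: algebra_simps)
  also have "red q (sadd0 q (mu0 k s x y) (mu0 k s x w)) = sadd q (mu q k s x y) (mu q k s x w)"
    by (simp add: mu_def sadd_def sadd0_red_l sadd0_red_r)
  finally show ?thesis .
qed

lemma mu_assoc: assumes "s \<longrightarrow> k = 2"
  shows "mu q k s (mu q k s x y) w = mu q k s x (mu q k s y w)"
proof -
  obtain x1 x2 x3 where x: "x = (x1,x2,x3)" by (cases x) auto
  obtain y1 y2 y3 where y: "y = (y1,y2,y3)" by (cases y) auto
  obtain w1 w2 w3 where w: "w = (w1,w2,w3)" by (cases w) auto
  have "mu q k s (mu q k s x y) w = red q (mu0 k s (mu0 k s x y) w)"
    by (simp add: mu_def mu0_red_l)
  also have "mu0 k s (mu0 k s x y) w = mu0 k s x (mu0 k s y w)"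
    using assms unfolding x y w
    by (cases s) (simp_all add: algebra_simps power_mult_distrib power2_eq_square)
  also have "red q (mu0 k s x (mu0 k s y w)) = mu q k s x (mu q k s y w)"
    by (simp add: mu_def mu0_red_r)
  finally show ?thesis .
qed



lemma TT_memI: "0 \<le> a \<Longrightarrow> a < q \<Longrightarrow> 0 \<le> b \<Longrightarrow> b < q \<Longrightarrow> 0 \<le> c \<Longrightarrow> c < q \<Longrightarrow> (a,b,c) \<in> TT q"
  by (simp add: TT_def)

lemma TT_memD: "(a,b,c) \<in> TT q \<Longrightarrow> 0 \<le> a \<and> a < q \<and> 0 \<le> b \<and> b < q \<and> 0 \<le> c \<and> c < q"
  by (simp add: TT_def)

lemma finite_TT: "finite (TT q)"
  by (simp add: TT_def)

lemma mu_one_l: "x \<in> TT q \<Longrightarrow> mu q k s (1,0,0) x = x"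
  by (cases x) (auto simp: mu_def TT_def)

lemma mu_one_r: "x \<in> TT q \<Longrightarrow> mu q k s x (1,0,0) = x"
  by (cases x) (auto simp: mu_def TT_def)

lemma cong_cancel_prime:
  fixes q a :: int
  assumes "Factorial_Ring.prime q" "0 < a" "a < q" "[a * x = a * y] (mod q)"
  shows "[x = y] (mod q)"
proof -
  have "\<not> q dvd a" using assms by (auto dest: zdvd_imp_le)
  then have "coprime a q" using assms(1) prime_imp_coprime_int coprime_commute by blast
  then show ?thesis using assms(4) cong_mult_lcancel by blast
qed

lemma cong_cancel_prime_pow:
  fixes q a :: int
  assumes "Factorial_Ring.prime q" "0 < a" "a < q" "[a ^ n * x = a ^ n * y] (mod q)"
  shows "[x = y] (mod q)"
proof -
  have "\<not> q dvd a" using assms by (auto dest: zdvd_imp_le)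
  then have "coprime a q" using assms(1) prime_imp_coprime_int coprime_commute by blast
  then have "coprime (a^n) q" by simp
  then show ?thesis using assms(4) cong_mult_lcancel by blast
qed

lemma mu_inj:
  assumes q: "Factorial_Ring.prime q" and x: "x \<in> TT q" "fst x \<noteq> 0"
  shows "inj_on (mu q k s x) (TT q)"
proof (rule inj_onI)
  fix y y' assume y: "y \<in> TT q" and y': "y' \<in> TT q" and eq: "mu q k s x y = mu q k s x y'"
  obtain x1 x2 x3 where xx: "x = (x1,x2,x3)" by (cases x) auto
  obtain y1 y2 y3 where yy: "y = (y1,y2,y3)" by (cases y) auto
  obtain y1' y2' y3' where yy': "y' = (y1',y2',y3')" by (cases y') auto
  have x1: "0 < x1" "x1 < q" using x TT_memD[of x1 x2 x3 q] unfolding xx by auto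
  note r = TT_memD[OF y[unfolded yy]] TT_memD[OF y'[unfolded yy']]
  from eq have e: "[x1*y1 = x1*y1'] (mod q)" "[x2*y1 + x1^k*y2 = x2*y1' + x1^k*y2'] (mod q)"
     "[x3*y1 + (if s then x1*x2*y2 else 0) + x1*x1^k*y3 = x3*y1' + (if s then x1*x2*y2' else 0) + x1*x1^k*y3'] (mod q)"
    unfolding xx yy yy' mu_def mu0.simps red_eq_iff by auto
  have 1: "y1 = y1'" using cong_cancel_prime[OF q x1 e(1)] r by (intro cong_less_imp_eq_int) auto
  have "[x1^k*y2 = x1^k*y2'] (mod q)" using e(2) unfolding 1 cong_add_lcancel .
  then have 2: "y2 = y2'" using cong_cancel_prime_pow[OF q x1] r by (intro cong_less_imp_eq_int) auto
  have "[x1*x1^k*y3 = x1*x1^k*y3'] (mod q)" using e(3) unfolding 1 2 cong_add_lcancel .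
  then have "[x1*(x1^k*y3) = x1*(x1^k*y3')] (mod q)" by (simp add: mult.assoc)
  then have "[x1^k*y3 = x1^k*y3'] (mod q)" by (rule cong_cancel_prime[OF q x1])
  then have 3: "y3 = y3'" using cong_cancel_prime_pow[OF q x1] r by (intro cong_less_imp_eq_int) auto
  show "y = y'" unfolding yy yy' 1 2 3 by simp
qed

lemma mu_noninj:
  assumes "fst x = 0"
  shows "mu q k s x (1,0,0) = mu q k s x (1,0,1)"
  using assms by (cases x) (simp add: mu_def)


lemma sadd_comm_iff:
  assumes q: "Factorial_Ring.prime q" "odd q" and x: "x \<in> TT q"
  shows "(\<forall>y\<in>TT q. sadd q x y = sadd q y x) \<longleftrightarrow> fst x = 0 \<and> fst (snd x) = 0"
proof -
  obtain a b c where xx: "x = (a,b,c)" by (cases x) auto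
  have r: "0 \<le> a" "a < q" "0 \<le> b" "b < q" using TT_memD[of a b c q] x xx by auto
  have q1: "q > 1" using q prime_gt_1_int by blast
  define h where "h = (q+1) div 2"
  have h2: "2 * h = q + 1" using q(2) unfolding h_def by presburger
  have key: "[2 * h * t = t] (mod q)" for t
    unfolding h2 cong_def by (simp add: distrib_right)
  show ?thesis
  proof
    assume H: "\<forall>y\<in>TT q. sadd q x y = sadd q y x"
    have "sadd q x (1,0,0) = sadd q (1,0,0) x" using H q1 by (auto intro!: TT_memI)
    then have "red q (a+1, b, c + h * b) = red q (1+a, b, c - h * b)"
      unfolding xx sadd_def h_def by simp
    then have "[c + h * b = c - h * b] (mod q)" unfolding red_eq_iff by blast
    then have "[(c + h * b) + h * b = (c - h * b) + h * b] (mod q)"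
      by (rule cong_add) simp
    then have "[c + 2 * h * b = c + 0] (mod q)" by (simp add: algebra_simps)
    then have "[2 * h * b = 0] (mod q)" unfolding cong_add_lcancel .
    then have "[b = 0] (mod q)" using key[of b] by (metis cong_sym cong_trans)
    then have b0: "b = 0" using r by (intro cong_less_imp_eq_int) auto
    have "sadd q x (0,1,0) = sadd q (0,1,0) x" using H q1 by (auto intro!: TT_memI)
    then have "red q (a, b+1, c - h * a) = red q (a, 1+b, c + h * a)"
      unfolding xx sadd_def h_def by simp
    then have "[c - h * a = c + h * a] (mod q)" unfolding red_eq_iff by blast
    then have "[(c - h * a) + h * a = (c + h * a) + h * a] (mod q)"
      by (rule cong_add) simp
    then have "[c + 0 = c + 2 * h * a] (mod q)" by (simp add: algebra_simps)
    then have "[0 = 2 * h * a] (mod q)" unfolding cong_add_lcancel .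
    then have "[a = 0] (mod q)" using key[of a] by (metis cong_sym cong_trans)
    then have a0: "a = 0" using r by (intro cong_less_imp_eq_int) auto
    show "fst x = 0 \<and> fst (snd x) = 0" using a0 b0 xx by simp
  next
    assume "fst x = 0 \<and> fst (snd x) = 0"
    then have "a = 0" "b = 0" using xx by auto
    then show "\<forall>y\<in>TT q. sadd q x y = sadd q y x"
      unfolding xx sadd_def by (auto simp: add.commute)
  qed
qed

fun spow :: "int \<Rightarrow> nat \<Rightarrow> tri \<Rightarrow> tri" where
  "spow q 0 x = (0,0,0)"
| "spow q (Suc n) x = sadd q x (spow q n x)"

lemma spow_e: "spow q n (1,0,0) = (int n mod q, 0, 0)"
  by (induction n) (simp_all add: sadd_def mod_simps add.commute)

lemma spow_z: "spow q n (0,0,c) = (0, 0, (int n * c) mod q)"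
  by (induction n) (simp_all add: sadd_def mod_simps algebra_simps)

lemma spow_TT: "q > 0 \<Longrightarrow> spow q n x \<in> TT q"
  by (cases n) (simp add: TT_def, simp add: sadd_TT)

lemma mu_e_z: "mu q k s (int n mod q, 0, 0) (0,0,c) = spow q (n^(k+1)) (0,0,c)"
proof -
  have "red q (int n, 0, 0) = (int n mod q, 0, 0)" by simp
  then have "mu q k s (int n mod q, 0, 0) (0,0,c) = red q (mu0 k s (int n, 0, 0) (0,0,c))"
    unfolding mu_def using mu0_red_l[of q k s "(int n,0,0)" "(0,0,c)"] by simp
  then show ?thesis by (simp add: mu_def spow_z algebra_simps)
qed


definition ciso :: "int \<Rightarrow> nat \<times> bool \<Rightarrow> nat \<times> bool \<Rightarrow> (tri \<Rightarrow> tri) \<Rightarrow> bool" where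
  "ciso q A B g \<longleftrightarrow> bij_betw g (TT q) (TT q) \<and>
     (\<forall>x\<in>TT q. \<forall>y\<in>TT q. g (sadd q x y) = sadd q (g x) (g y) \<and>
        g (mu q (fst A) (snd A) x y) = mu q (fst B) (snd B) (g x) (g y))"

lemma ciso_inv:
  assumes "ciso q A B g"
  shows "ciso q B A (inv_into (TT q) g)"
proof -
  let ?h = "inv_into (TT q) g"
  have b: "bij_betw g (TT q) (TT q)" using assms ciso_def by blast
  have bh: "bij_betw ?h (TT q) (TT q)" using bij_betw_inv_into[OF b] .
  have hg: "?h (g x) = x" if "x \<in> TT q" for x using b that by (simp add: bij_betw_inv_into_left)
  have gh: "g (?h x) = x" if "x \<in> TT q" for x using b that by (simp add: bij_betw_inv_into_right)
  have hT: "?h x \<in> TT q" if "x \<in> TT q" for x using bh that bij_betwE by blast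
  have q0: "q > 0" if "x \<in> TT q" for x using that by (cases x) (auto simp: TT_def)
  show ?thesis unfolding ciso_def
  proof (intro conjI bh ballI)
    fix x y assume x: "x \<in> TT q" and y: "y \<in> TT q"
    have "?h (sadd q x y) = ?h (sadd q (g (?h x)) (g (?h y)))" using gh x y by simp
    also have "\<dots> = ?h (g (sadd q (?h x) (?h y)))" using assms hT x y unfolding ciso_def by simp
    also have "\<dots> = sadd q (?h x) (?h y)" using hg sadd_TT q0 x by blast
    finally show "?h (sadd q x y) = sadd q (?h x) (?h y)" .
    have "?h (mu q (fst B) (snd B) x y) = ?h (mu q (fst B) (snd B) (g (?h x)) (g (?h y)))" using gh x y by simp
    also have "\<dots> = ?h (g (mu q (fst A) (snd A) (?h x) (?h y)))" using assms hT x y unfolding ciso_def by simp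
    also have "\<dots> = mu q (fst A) (snd A) (?h x) (?h y)" using hg mu_TT q0 x by blast
    finally show "?h (mu q (fst B) (snd B) x y) = mu q (fst A) (snd A) (?h x) (?h y)" .
  qed
qed

context
  fixes q :: int and k s k' s' g
  assumes q: "Factorial_Ring.prime q" "odd q"
    and G: "ciso q (k,s) (k',s') g"
begin

lemma q1: "q > 1" using q prime_gt_1_int by blast

lemma gb: "bij_betw g (TT q) (TT q)" using G ciso_def by blast
lemma gT: "x \<in> TT q \<Longrightarrow> g x \<in> TT q" using gb bij_betwE by blast
lemma ginj: "x \<in> TT q \<Longrightarrow> y \<in> TT q \<Longrightarrow> g x = g y \<Longrightarrow> x = y"
  using gb by (auto simp: bij_betw_def inj_on_def)
lemma gsurj: "y \<in> TT q \<Longrightarrow> \<exists>x\<in>TT q. y = g x"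
  using gb by (auto simp: bij_betw_def)
lemma gadd: "x \<in> TT q \<Longrightarrow> y \<in> TT q \<Longrightarrow> g (sadd q x y) = sadd q (g x) (g y)"
  using G ciso_def by auto
lemma gmul: "x \<in> TT q \<Longrightarrow> y \<in> TT q \<Longrightarrow> g (mu q k s x y) = mu q k' s' (g x) (g y)"
  using G ciso_def by auto

lemma z_TT: "(0,0,0) \<in> TT q" using q1 by (simp add: TT_def)
lemma e_TT: "(1,0,0) \<in> TT q" using q1 by (simp add: TT_def)
lemma e1_TT: "(1,0,1) \<in> TT q" using q1 by (simp add: TT_def)

lemma sadd_idem:
  assumes "x \<in> TT q" "sadd q x x = x" shows "x = (0,0,0)"
proof -
  obtain a b c where xx: "x = (a,b,c)" by (cases x) auto
  have r: "0 \<le> a" "a < q" "0 \<le> b" "b < q" "0 \<le> c" "c < q" using TT_memD[of a b c q] assms xx by auto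
  have "red q (a+a, b+b, c+ c) = red q (a, b, c)"
    using assms(2) red_id[OF assms(1)] unfolding xx sadd_def by simp
  then have "[a + a = a + 0] (mod q)" "[b + b = b + 0] (mod q)" "[c + c = c + 0] (mod q)"
    unfolding red_eq_iff by auto
  then have "[a = 0] (mod q)" "[b = 0] (mod q)" "[c = 0] (mod q)" unfolding cong_add_lcancel by auto
  then show ?thesis using r xx by (auto intro: cong_less_imp_eq_int)
qed

lemma g0: "g (0,0,0) = (0,0,0)"
proof -
  have "sadd q (0,0,0) (0,0,0) = (0,0,0)" by (simp add: sadd_def)
  then have "g (0,0,0) = sadd q (g (0,0,0)) (g (0,0,0))" using gadd z_TT by metis
  then show ?thesis using sadd_idem gT z_TT by metis
qed

lemma ge: "g (1,0,0) = (1,0,0)"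
proof -
  have "mu q k' s' (g (1,0,0)) y = y" if y: "y \<in> TT q" for y
  proof -
    obtain x where x: "x \<in> TT q" "y = g x" using gsurj y by blast
    then show ?thesis using gmul[OF e_TT x(1)] mu_one_l[OF x(1)] by simp
  qed
  from this[OF e_TT] show ?thesis using mu_one_r[OF gT[OF e_TT]] by simp
qed

lemma gL: assumes "x \<in> TT q" "fst x = 0" shows "fst (g x) = 0"
proof (rule ccontr)
  assume "fst (g x) \<noteq> 0"
  then have "inj_on (mu q k' s' (g x)) (TT q)" using mu_inj q gT assms by blast
  moreover have "mu q k' s' (g x) (g (1,0,0)) = mu q k' s' (g x) (g (1,0,1))"
    using gmul[OF assms(1) e_TT] gmul[OF assms(1) e1_TT] mu_noninj[OF assms(2)] by metis
  ultimately have "g (1,0,0) = g (1,0,1)" using gT e_TT e1_TT by (auto simp: inj_on_def)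
  then show False using ginj e_TT e1_TT by fastforce
qed

lemma gU: assumes "x \<in> TT q" "fst x \<noteq> 0" shows "fst (g x) \<noteq> 0"
proof
  assume a: "fst (g x) = 0"
  obtain y1 where y1: "y1 \<in> TT q" "(1,0,0) = g y1" using gsurj e_TT by blast
  obtain y2 where y2: "y2 \<in> TT q" "(1,0,1) = g y2" using gsurj e1_TT by blast
  have "g (mu q k s x y1) = g (mu q k s x y2)"
    using gmul[OF assms(1) y1(1)] gmul[OF assms(1) y2(1)] mu_noninj[OF a] y1 y2 by metis
  then have "mu q k s x y1 = mu q k s x y2" using ginj mu_TT q1 by (meson less_trans zero_less_one)
  then have "y1 = y2" using mu_inj[OF q(1) assms] y1 y2 by (auto simp: inj_on_def)
  then have "(1::int,0::int,0::int) = (1,0,1)" using y1 y2 by simp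
  then show False by simp
qed

lemma gZ: assumes "x \<in> TT q" "fst x = 0" "fst (snd x) = 0"
  shows "fst (g x) = 0 \<and> fst (snd (g x)) = 0"
proof -
  have "\<forall>y\<in>TT q. sadd q (g x) y = sadd q y (g x)"
  proof
    fix y assume "y \<in> TT q"
    then obtain y' where y': "y' \<in> TT q" "y = g y'" using gsurj by blast
    have "sadd q x y' = sadd q y' x" using sadd_comm_iff[OF q assms(1)] assms y' by auto
    then show "sadd q (g x) y = sadd q y (g x)" using gadd y' assms(1) by metis
  qed
  then show ?thesis using sadd_comm_iff[OF q gT[OF assms(1)]] by blast
qed

lemma gspow: "x \<in> TT q \<Longrightarrow> g (spow q n x) = spow q n (g x)"
proof (induction n)
  case 0 then show ?case using g0 by simp
next
  case (Suc n)
  then show ?case using gadd spow_TT q1 by simp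
qed

end


lemma coprime_small:
  fixes q c :: int
  assumes "Factorial_Ring.prime q" "0 < c" "c < q" shows "coprime c q"
proof -
  have "\<not> q dvd c" using assms by (auto dest: zdvd_imp_le)
  then show ?thesis using assms(1) prime_imp_coprime_int coprime_commute by blast
qed

lemma ciso_pow_cong:
  assumes q: "Factorial_Ring.prime q" "odd q" and G: "ciso q (k,s) (k',s') g"
  shows "[int n ^ (k+1) = int n ^ (k'+1)] (mod q)"
proof -
  note q1 = q1[OF q G]
  have zT: "(0,0,1) \<in> TT q" using q1 by (simp add: TT_def)
  obtain a b c where gz: "g (0,0,1) = (a,b,c)" by (cases "g (0,0,1)") auto
  have "a = 0" "b = 0" using gZ[OF q G zT] gz by auto
  have cr: "0 \<le> c" "c < q" using gT[OF q G zT] gz TT_memD by auto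
  have "c \<noteq> 0"
  proof
    assume "c = 0"
    then have "g (0,0,1) = g (0,0,0)" using gz g0[OF q G] \<open>a = 0\<close> \<open>b = 0\<close> by simp
    then have "(0::int,0::int,1::int) = (0,0,0)" using ginj[OF q G zT z_TT[OF q G]] by blast
    then show False by simp
  qed
  then have cp: "coprime c q" using coprime_small q cr by simp
  have en: "spow q n (1,0,0) = (int n mod q, 0, 0)" by (rule spow_e)
  have gen: "g (int n mod q, 0, 0) = (int n mod q, 0, 0)"
    using gspow[OF q G e_TT[OF q G], of n] ge[OF q G] en by simp
  have enT: "(int n mod q, 0, 0) \<in> TT q" using q1 by (simp add: TT_def)
  have "g (mu q k s (int n mod q, 0, 0) (0,0,1)) = mu q k' s' (int n mod q, 0, 0) (0,0,c)"
    using gmul[OF q G enT zT] gen gz \<open>a = 0\<close> \<open>b = 0\<close> by simp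
  also have "\<dots> = spow q (n^(k'+1)) (0,0,c)" by (rule mu_e_z)
  finally have 1: "g (mu q k s (int n mod q, 0, 0) (0,0,1)) = (0,0,(int (n^(k'+1)) * c) mod q)"
    by (simp add: spow_z)
  have "g (mu q k s (int n mod q, 0, 0) (0,0,1)) = g (spow q (n^(k+1)) (0,0,1))" by (simp add: mu_e_z)
  also have "\<dots> = spow q (n^(k+1)) (0,0,c)" using gspow[OF q G zT] gz \<open>a = 0\<close> \<open>b = 0\<close> by simp
  finally have 2: "g (mu q k s (int n mod q, 0, 0) (0,0,1)) = (0,0,(int (n^(k+1)) * c) mod q)"
    by (simp add: spow_z)
  from 1 2 have "[int (n^(k+1)) * c = int (n^(k'+1)) * c] (mod q)" by (simp add: cong_def)
  then have "[int (n^(k+1)) = int (n^(k'+1))] (mod q)" using cong_mult_rcancel[OF cp] by blast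
  then show ?thesis by simp
qed

lemma primroot_cong:
  fixes p :: nat
  assumes p: "Factorial_Ring.prime p" and H: "\<And>n::nat. [n ^ (k+1) = n ^ (k'+1)] (mod p)"
  shows "[k = k'] (mod (p - 1))"
proof -
  obtain r where r: "residue_primroot p r" using prime_primitive_root_exists[OF prime_gt_1_nat[OF p] p] by blast
  then have cp: "coprime p r" and o: "ord p r = p - 1"
    using p by (auto simp: residue_primroot_def totient_prime)
  have "[k + 1 = k' + 1] (mod ord p r)" using order_divides_expdiff[OF cp] H by blast
  then show ?thesis unfolding o using cong_add_rcancel_nat by blast
qed

lemma ciso_k_cong:
  fixes p :: nat
  assumes p: "Factorial_Ring.prime p" "odd p" and G: "ciso (int p) (k,s) (k',s') g"
  shows "[k = k'] (mod (p - 1))"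
proof (rule primroot_cong[OF p(1)])
  fix n :: nat
  have "Factorial_Ring.prime (int p)" "odd (int p)" using p by (auto simp: prime_nat_int_transfer)
  from ciso_pow_cong[OF this G, of n] show "[n ^ (k+1) = n ^ (k'+1)] (mod p)"
    by (metis cong_int_iff of_nat_power)
qed

lemma ciso_LL:
  assumes q: "Factorial_Ring.prime q" "odd q" and G: "ciso q (0,s) (k',s') g" and k: "k' \<ge> 1"
  shows False
proof -
  note q1 = q1[OF q G]
  have lT: "(0,1,0) \<in> TT q" using q1 by (simp add: TT_def)
  have "mu q 0 s (0,1,0) (0,1,0) = (0,1,0)" using q1 by (simp add: mu_def)
  then have e: "g (0,1,0) = mu q k' s' (g (0,1,0)) (g (0,1,0))" using gmul[OF q G lT lT] by simp
  obtain a b c where gl: "g (0,1,0) = (a,b,c)" by (cases "g (0,1,0)") auto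
  have "a = 0" using gL[OF q G lT] gl by simp
  have "mu q k' s' (g (0,1,0)) (g (0,1,0)) = (0,0,0)" using gl \<open>a = 0\<close> k by (simp add: mu_def power_0_left)
  then have "g (0,1,0) = g (0,0,0)" using e g0[OF q G] by simp
  then have "(0::int,1::int,0::int) = (0,0,0)" using ginj[OF q G lT z_TT[OF q G]] by blast
  then show False by simp
qed

lemma ciso_special:
  assumes q: "Factorial_Ring.prime q" "odd q" and G: "ciso q (2,True) (2,False) g"
  shows False
proof -
  note q1 = q1[OF q G]
  have uT: "(1,1,0) \<in> TT q" and lT: "(0,1,0) \<in> TT q" and zT: "(0,0,1) \<in> TT q"
    using q1 by (simp_all add: TT_def)
  have m1: "mu q 2 True (1,1,0) (0,0,1) = (0,0,1)" using q1 by (simp add: mu_def)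
  have m2: "mu q 2 True (1,1,0) (0,1,0) = sadd q (0,1,0) (0,0,1)" using q1 by (simp add: mu_def sadd_def)
  obtain a b c where gu: "g (1,1,0) = (a,b,c)" by (cases "g (1,1,0)") auto
  obtain a2 l2 l3 where gl: "g (0,1,0) = (a2,l2,l3)" by (cases "g (0,1,0)") auto
  obtain a3 b3 c3 where gz: "g (0,0,1) = (a3,b3,c3)" by (cases "g (0,0,1)") auto
  have "a \<noteq> 0" using gU[OF q G uT] gu by simp
  have ar: "0 \<le> a" "a < q" using gT[OF q G uT] gu TT_memD by auto
  have "a2 = 0" using gL[OF q G lT] gl by simp
  have "a3 = 0" "b3 = 0" using gZ[OF q G zT] gz by auto
  have cr: "0 \<le> c3" "c3 < q" using gT[OF q G zT] gz TT_memD by auto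
  have "c3 \<noteq> 0"
  proof
    assume "c3 = 0"
    then have "g (0,0,1) = g (0,0,0)" using gz g0[OF q G] \<open>a3 = 0\<close> \<open>b3 = 0\<close> by simp
    then have "(0::int,0::int,1::int) = (0,0,0)" using ginj[OF q G zT z_TT[OF q G]] by blast
    then show False by simp
  qed
  then have cp: "coprime c3 q" using coprime_small q cr by simp
  have "g (0,0,1) = mu q 2 False (g (1,1,0)) (g (0,0,1))" using gmul[OF q G uT zT] m1 by simp
  then have "red q (0,0,c3) = red q (0, 0, a * a^2 * c3)"
    using gu gz \<open>a3 = 0\<close> \<open>b3 = 0\<close> red_id[OF gT[OF q G zT]] by (simp add: mu_def)
  then have "[a * a^2 * c3 = 1 * c3] (mod q)" unfolding red_eq_iff by (simp add: cong_sym)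
  then have a3: "[a * a^2 = 1] (mod q)" using cong_mult_rcancel[OF cp] by blast
  have "g (sadd q (0,1,0) (0,0,1)) = mu q 2 False (g (1,1,0)) (g (0,1,0))" using gmul[OF q G uT lT] m2 by simp
  then have "sadd q (g (0,1,0)) (g (0,0,1)) = mu q 2 False (g (1,1,0)) (g (0,1,0))"
    using gadd[OF q G lT zT] by simp
  then have "red q (0, l2, l3 + c3) = red q (0, a^2 * l2, a * a^2 * l3)"
    using gu gz gl \<open>a3 = 0\<close> \<open>b3 = 0\<close> \<open>a2 = 0\<close> by (simp add: mu_def sadd_def)
  then have "[l3 + c3 = a * a^2 * l3] (mod q)" unfolding red_eq_iff by blast
  moreover have "[a * a^2 * l3 = 1 * l3] (mod q)" using a3 by (rule cong_mult) simp
  ultimately have "[l3 + c3 = l3 + 0] (mod q)" by (simp add: cong_trans)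
  then have "[c3 = 0] (mod q)" unfolding cong_add_lcancel .
  then have "c3 = 0" using cr by (intro cong_less_imp_eq_int) auto
  then show False using \<open>c3 \<noteq> 0\<close> by simp
qed


definition par :: "nat \<Rightarrow> nat \<Rightarrow> nat \<times> bool" where
  "par p i = (if i < p then (i, False) else (2, True))"

lemma cong_small_cases:
  fixes i j m :: nat
  assumes "[i = j] (mod m)" "i \<le> m" "j \<le> m" "i < j"
  shows "i = 0 \<and> j = m"
proof -
  have "m dvd (j - i)" using assms cong_altdef_nat[of i j m] cong_sym_eq by (metis less_imp_le)
  moreover have "0 < j - i" "j - i \<le> m" using assms by auto
  ultimately have "j - i = m" by (meson dvd_imp_le le_antisym)
  then show ?thesis using assms by auto
qed

lemma ciso_par_lt:
  fixes p :: nat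
  assumes p: "Factorial_Ring.prime p" "odd p" and ij: "i < p" "j \<le> p" "i \<noteq> j"
    and G: "ciso (int p) (par p i) (par p j) g"
  shows False
proof -
  have q: "Factorial_Ring.prime (int p)" "odd (int p)" using p by (auto simp: prime_nat_int_transfer)
  have p3: "p \<ge> 3" using prime_ge_2_nat[OF p(1)] p(2) by (cases "p = 2") auto
  have p1: "p - 1 \<ge> 1" using p3 by simp
  show False
  proof (cases "j < p")
    case True
    then have G': "ciso (int p) (i,False) (j,False) g" using G ij by (simp add: par_def)
    have c: "[i = j] (mod (p - 1))" by (rule ciso_k_cong[OF p G'])
    show False
    proof (cases "i < j")
      case True
      then have "i = 0 \<and> j = p - 1" using cong_small_cases[OF c] ij \<open>j < p\<close> by auto
      then have "ciso (int p) (0,False) (p - 1,False) g" using G' by simp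
      then show False using ciso_LL[OF q _ p1] by blast
    next
      case False
      then have "j < i" using ij by auto
      then have "j = 0 \<and> i = p - 1" using cong_small_cases[OF cong_sym[OF c]] ij \<open>j < p\<close> by auto
      moreover have "ciso (int p) (j,False) (i,False) (inv_into (TT (int p)) g)" using ciso_inv[OF G'] by simp
      ultimately have "ciso (int p) (0,False) (p - 1,False) (inv_into (TT (int p)) g)" by simp
      then show False using ciso_LL[OF q _ p1] by blast
    qed
  next
    case False
    then have G': "ciso (int p) (i,False) (2,True) g" using G ij by (simp add: par_def)
    have c: "[i = 2] (mod (p - 1))" by (rule ciso_k_cong[OF p G'])
    have "i = 2 \<or> i = 0"
    proof (cases "i < 2")
      case True
      then show ?thesis
      proof (cases "i = 1")
        case True
        then have "(p - 1) dvd 1" using c cong_altdef_nat[of 1 2 "p - 1"] cong_sym_eq by auto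
        then show ?thesis using p3 by simp
      qed auto
    next
      case False
      then have "i = 2 \<or> 2 < i" by auto
      then show ?thesis
      proof
        assume "2 < i"
        moreover have "i \<le> p - 1" "2 \<le> p - 1" using ij p3 by auto
        ultimately have "(2::nat) = 0 \<and> i = p - 1" using cong_small_cases[OF cong_sym[OF c]] by blast
        then show ?thesis by simp
      qed simp
    qed
    then show False
    proof
      assume "i = 2"
      then show False using ciso_special[OF q] ciso_inv[OF G'] by simp
    next
      assume "i = 0"
      then have "ciso (int p) (0,False) (2,True) g" using G' by simp
      moreover have "(2::nat) \<ge> 1" by simp
      ultimately show False using ciso_LL[OF q] by blast
    qed
  qed
qed

lemma ciso_par:
  fixes p :: nat
  assumes p: "Factorial_Ring.prime p" "odd p" and ij: "i \<le> p" "j \<le> p" "i \<noteq> j"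
    and G: "ciso (int p) (par p i) (par p j) g"
  shows False
proof (cases "i < p")
  case True then show False using ciso_par_lt[OF p _ ij(2,3) G] by blast
next
  case False
  then have "j < p" using ij by auto
  then show False using ciso_par_lt[OF p \<open>j < p\<close> ij(1)] ij(3) ciso_inv[OF G] by metis
qed


lemma (in group) center_nontrivial:
  assumes fin: "finite (carrier G)" and p: "Factorial_Ring.prime p" and ord: "order G = p^n" and n: "n \<ge> 1"
  shows "\<exists>x\<in>carrier G. x \<noteq> \<one> \<and> (\<forall>y\<in>carrier G. x \<otimes> y = y \<otimes> x)"
proof (rule ccontr)
  assume nc: "\<not> ?thesis"
  define \<phi> where "\<phi> = (\<lambda>g. \<lambda>h\<in>carrier G. g \<otimes> h \<otimes> inv g)"
  interpret A: group_action G "carrier G" \<phi> unfolding \<phi>_def by (rule action_by_conjugation)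
  define Obs where "Obs = orbits G (carrier G) \<phi>"
  have finO: "finite Obs" unfolding Obs_def orbits_def using fin by simp
  have orb_sub: "ob \<subseteq> carrier G" if "ob \<in> Obs" for ob
    using that A.orbits_coverture unfolding Obs_def by blast
  have fino: "finite ob" if "ob \<in> Obs" for ob using orb_sub[OF that] fin finite_subset by blast
  have sumO: "(\<Sum>ob\<in>Obs. card ob) = order G"
  proof -
    have "(\<Sum>ob\<in>Obs. \<Sum>x\<in>ob. (1::nat)) = (\<Sum>x\<in>carrier G. 1)"
      unfolding Obs_def by (rule A.disjoint_sum[OF fin])
    then show ?thesis by (simp add: order_def)
  qed
  have orbx: "x \<in> orbit G \<phi> x" if "x \<in> carrier G" for x
    unfolding orbit_def
    by (rule CollectI, rule exI[of _ "\<one>"]) (use that in \<open>simp add: \<phi>_def\<close>)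
  have cardo: "card ob = 1 \<or> p dvd card ob" if ob: "ob \<in> Obs" for ob
  proof -
    obtain x where x: "x \<in> carrier G" "ob = orbit G \<phi> x" using ob unfolding Obs_def orbits_def by blast
    have "card ob * card (stabilizer G \<phi> x) = p^n" using A.orbit_stabilizer_theorem[OF x(1)] x ord by simp
    then have "card ob dvd p^n" by (metis dvd_triv_left)
    then obtain i where "i \<le> n" "card ob = p^i" using p by (auto simp: divides_primepow_nat)
    then show ?thesis by (cases i) auto
  qed
  define Ob1 where "Ob1 = {ob\<in>Obs. card ob = 1}"
  have Ob1: "Ob1 = {{\<one>}}"
  proof
    show "Ob1 \<subseteq> {{\<one>}}"
    proof
      fix ob assume ob: "ob \<in> Ob1"
      obtain x where x: "x \<in> carrier G" "ob = orbit G \<phi> x" using ob unfolding Ob1_def Obs_def orbits_def by blast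
      have c1: "card ob = 1" using ob Ob1_def by simp
      then have ox: "ob = {x}" using orbx[OF x(1)] x(2) by (metis card_1_singletonE singletonD)
      have "x \<otimes> y = y \<otimes> x" if y: "y \<in> carrier G" for y
      proof -
        have "\<phi> y x \<in> ob" unfolding x(2) orbit_def using y by blast
        then have "y \<otimes> x \<otimes> inv y = x" using ox x(1) by (simp add: \<phi>_def)
        then show ?thesis using x(1) y by (metis inv_solve_right m_closed)
      qed
      then have "x = \<one>" using nc x(1) by blast
      then show "ob \<in> {{\<one>}}" using ox by simp
    qed
  next
    have "orbit G \<phi> \<one> = {\<one>}" unfolding orbit_def \<phi>_def by (auto intro!: exI[of _ "\<one>"])
    moreover have "orbit G \<phi> \<one> \<in> Obs" unfolding Obs_def orbits_def by blast
    ultimately show "{{\<one>}} \<subseteq> Ob1" unfolding Ob1_def by auto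
  qed
  have "(\<Sum>ob\<in>Obs. card ob) = (\<Sum>ob\<in>Ob1. card ob) + (\<Sum>ob\<in>Obs - Ob1. card ob)"
    using finO by (metis (no_types, lifting) Ob1_def mem_Collect_eq subsetI sum.subset_diff add.commute)
  also have "(\<Sum>ob\<in>Ob1. card ob) = 1" using Ob1 by simp
  finally have "order G = 1 + (\<Sum>ob\<in>Obs - Ob1. card ob)" using sumO by simp
  moreover have "p dvd (\<Sum>ob\<in>Obs - Ob1. card ob)"
    by (rule dvd_sum) (use cardo Ob1_def in auto)
  moreover have "p dvd order G" using ord n by (simp add: dvd_power)
  ultimately have "p dvd 1 + (\<Sum>ob\<in>Obs - Ob1. card ob)" "p dvd (\<Sum>ob\<in>Obs - Ob1. card ob)" by simp_all
  then have "p dvd 1" using dvd_add_left_iff by blast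
  then show False using p by simp
qed


definition cent :: "('a, 'b) monoid_scheme \<Rightarrow> 'a \<Rightarrow> 'a set" where
  "cent G x = {y \<in> carrier G. x \<otimes>\<^bsub>G\<^esub> y = y \<otimes>\<^bsub>G\<^esub> x}"

definition Zc :: "('a, 'b) monoid_scheme \<Rightarrow> 'a set" where
  "Zc G = {x \<in> carrier G. \<forall>y\<in>carrier G. x \<otimes>\<^bsub>G\<^esub> y = y \<otimes>\<^bsub>G\<^esub> x}"

lemma (in group) comm_mult_lem:
  assumes "a \<in> carrier G" "b \<in> carrier G" "x \<in> carrier G" "x \<otimes> a = a \<otimes> x" "x \<otimes> b = b \<otimes> x"
  shows "x \<otimes> (a \<otimes> b) = (a \<otimes> b) \<otimes> x"
proof -
  have "x \<otimes> (a \<otimes> b) = (x \<otimes> a) \<otimes> b" using assms(1-3) by (simp add: m_assoc)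
  also have "\<dots> = (a \<otimes> x) \<otimes> b" using assms(4) by simp
  also have "\<dots> = a \<otimes> (x \<otimes> b)" using assms(1-3) by (simp add: m_assoc)
  also have "\<dots> = a \<otimes> (b \<otimes> x)" using assms(5) by simp
  also have "\<dots> = (a \<otimes> b) \<otimes> x" using assms(1-3) by (simp add: m_assoc)
  finally show ?thesis .
qed

lemma (in group) comm_inv_lem:
  assumes a: "a \<in> carrier G" and x: "x \<in> carrier G" and c: "x \<otimes> a = a \<otimes> x"
  shows "x \<otimes> inv a = inv a \<otimes> x"
proof -
  have "a \<otimes> (x \<otimes> inv a) = (a \<otimes> x) \<otimes> inv a" using m_assoc[OF a x inv_closed[OF a]] by simp
  also have "\<dots> = (x \<otimes> a) \<otimes> inv a" using c by simp
  also have "\<dots> = x \<otimes> (a \<otimes> inv a)" using m_assoc[OF x a inv_closed[OF a]] by simp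
  also have "\<dots> = x" using a x by simp
  finally have "x = a \<otimes> (x \<otimes> inv a)" by simp
  then have "inv a \<otimes> x = x \<otimes> inv a" using inv_solve_left'[OF m_closed[OF x inv_closed[OF a]] a x] by blast
  then show ?thesis by simp
qed

lemma (in group) cent_subgroup:
  assumes x: "x \<in> carrier G" shows "subgroup (cent G x) G"
proof (rule subgroupI)
  show "cent G x \<subseteq> carrier G" by (auto simp: cent_def)
  show "cent G x \<noteq> {}" using x by (auto simp: cent_def intro!: exI[of _ \<one>])
  fix a b assume a: "a \<in> cent G x" and b: "b \<in> cent G x"
  then have ac: "a \<in> carrier G" "x \<otimes> a = a \<otimes> x" and bc: "b \<in> carrier G" "x \<otimes> b = b \<otimes> x"
    by (auto simp: cent_def)
  have "x \<otimes> (a \<otimes> b) = (a \<otimes> b) \<otimes> x"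
    using ac bc x by (intro comm_mult_lem) auto
  then show "a \<otimes> b \<in> cent G x" using ac bc by (simp add: cent_def)
  have "x \<otimes> inv a = inv a \<otimes> x"
    using ac x by (intro comm_inv_lem) auto
  then show "inv a \<in> cent G x" using ac by (simp add: cent_def)
qed

lemma (in group) Zc_subgroup: "subgroup (Zc G) G"
proof (rule subgroupI)
  show "Zc G \<subseteq> carrier G" by (auto simp: Zc_def)
  show "Zc G \<noteq> {}" by (auto simp: Zc_def intro!: exI[of _ \<one>])
  fix a b assume a: "a \<in> Zc G" and b: "b \<in> Zc G"
  then have ac: "a \<in> carrier G" "\<And>y. y \<in> carrier G \<Longrightarrow> a \<otimes> y = y \<otimes> a"
    and bc: "b \<in> carrier G" "\<And>y. y \<in> carrier G \<Longrightarrow> b \<otimes> y = y \<otimes> b"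
    by (auto simp: Zc_def)
  have "(a \<otimes> b) \<otimes> y = y \<otimes> (a \<otimes> b)" if "y \<in> carrier G" for y
    using comm_mult_lem[OF ac(1) bc(1) that ac(2)[OF that, symmetric] bc(2)[OF that, symmetric]] by simp
  then show "a \<otimes> b \<in> Zc G" using ac(1) bc(1) unfolding Zc_def by blast
  have "inv a \<otimes> y = y \<otimes> inv a" if "y \<in> carrier G" for y
    using comm_inv_lem[OF ac(1) that ac(2)[OF that, symmetric]] by simp
  then show "inv a \<in> Zc G" using ac(1) unfolding Zc_def by blast
qed

lemma (in group) Zc_normal: "Zc G \<lhd> G"
  unfolding normal_inv_iff
proof (intro conjI Zc_subgroup ballI)
  fix x h assume x: "x \<in> carrier G" and h: "h \<in> Zc G"
  then have "x \<otimes> h = h \<otimes> x" "h \<in> carrier G" using x by (auto simp: Zc_def)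
  then have "x \<otimes> h \<otimes> inv x = h" using x by (simp add: m_assoc)
  then show "x \<otimes> h \<otimes> inv x \<in> Zc G" using h by simp
qed

lemma (in group) Zc_cent: "x \<in> carrier G \<Longrightarrow> Zc G \<subseteq> cent G x"
  by (auto simp: Zc_def cent_def)

lemma (in group) self_cent: "x \<in> carrier G \<Longrightarrow> x \<in> cent G x"
  by (auto simp: cent_def)

lemma (in group) card_subgroup_ppow:
  assumes fin: "finite (carrier G)" and p: "Factorial_Ring.prime p" and ord: "order G = p^n"
    and H: "subgroup H G"
  shows "\<exists>i\<le>n. card H = p^i"
proof -
  have "card H dvd order G" using lagrange[OF H] by (metis dvd_triv_right)
  then show ?thesis using p ord by (simp add: divides_primepow_nat)
qed

lemma (in group) subgroup_card_less:
  assumes fin: "finite (carrier G)" and p: "Factorial_Ring.prime p" and ord: "order G = p^n"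
    and H: "subgroup H G" and K: "subgroup K G" and HK: "H \<subseteq> K" "H \<noteq> K" and cH: "card H = p^i"
  shows "\<exists>j. i < j \<and> j \<le> n \<and> card K = p^j"
proof -
  obtain j where j: "j \<le> n" "card K = p^j" using card_subgroup_ppow[OF fin p ord K] by blast
  have "finite K" using K fin finite_subset subgroup.subset by blast
  then have "card H < card K" using HK psubset_card_mono by auto
  then have "p^i < p^j" using cH j by simp
  then have "i < j" using p by (metis power_less_imp_less_exp prime_gt_1_nat)
  then show ?thesis using j by blast
qed

lemma (in group) subgroup_full:
  assumes fin: "finite (carrier G)" and H: "subgroup H G" and c: "card H = order G"
  shows "H = carrier G"
  using card_subset_eq[OF fin subgroup.subset[OF H]] c by (simp add: order_def)

lemma (in group) Zc_big_full:
  assumes fin: "finite (carrier G)" and p: "Factorial_Ring.prime p" and ord: "order G = p^(Suc m)"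
    and cZ: "card (Zc G) = p^m"
  shows "Zc G = carrier G"
proof (rule ccontr)
  assume "Zc G \<noteq> carrier G"
  then obtain x where x: "x \<in> carrier G" "x \<notin> Zc G" using Zc_subgroup subgroup.subset by blast
  have "Zc G \<noteq> cent G x" using x self_cent by blast
  then obtain j where j: "m < j" "j \<le> Suc m" "card (cent G x) = p^j"
    using subgroup_card_less[OF fin p ord Zc_subgroup cent_subgroup[OF x(1)] Zc_cent[OF x(1)] _ cZ] by blast
  have "j = Suc m" using j by simp
  have "card (cent G x) = order G" using j(3) ord unfolding \<open>j = Suc m\<close> by simp
  then have "cent G x = carrier G" using subgroup_full[OF fin cent_subgroup[OF x(1)]] by blast
  then have "x \<in> Zc G" using x(1) by (auto simp: cent_def Zc_def)
  then show False using x by simp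
qed

lemma (in group) Zc_card_pos:
  assumes fin: "finite (carrier G)" and p: "Factorial_Ring.prime p" and ord: "order G = p^n" and n: "n \<ge> 1"
  shows "\<exists>i. 1 \<le> i \<and> i \<le> n \<and> card (Zc G) = p^i"
proof -
  obtain i where i: "i \<le> n" "card (Zc G) = p^i" using card_subgroup_ppow[OF fin p ord Zc_subgroup] by blast
  obtain x where x: "x \<in> carrier G" "x \<noteq> \<one>" "\<forall>y\<in>carrier G. x \<otimes> y = y \<otimes> x"
    using center_nontrivial[OF fin p ord n] by blast
  have "{\<one>, x} \<subseteq> Zc G" using x by (auto simp: Zc_def)
  moreover have "finite (Zc G)" using fin finite_subset Zc_subgroup subgroup.subset by blast
  ultimately have "card {\<one>, x} \<le> card (Zc G)" by (rule card_mono[rotated])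
  then have "2 \<le> p^i" using x i by simp
  then have "i \<noteq> 0" by (rule_tac ccontr) simp
  then show ?thesis using i by (intro exI[of _ i]) auto
qed

lemma (in group) order_p2_comm:
  assumes fin: "finite (carrier G)" and p: "Factorial_Ring.prime p" and ord: "order G = p^2"
  shows "comm_group G"
proof -
  obtain i where i: "1 \<le> i" "i \<le> 2" "card (Zc G) = p^i" using Zc_card_pos[OF fin p ord] by auto
  have "Zc G = carrier G"
  proof (cases "i = 2")
    case True
    then show ?thesis using subgroup_full[OF fin Zc_subgroup] i ord by simp
  next
    case False
    then have "i = 1" using i by simp
    have "order G = p^(Suc 1)" using ord by (simp add: numeral_2_eq_2)
    moreover have "card (Zc G) = p^1" using i \<open>i = 1\<close> by simp
    ultimately show ?thesis using Zc_big_full[OF fin p] by blast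
  qed
  then show ?thesis by (intro group_comm_groupI) (auto simp: Zc_def)
qed


lemma (in group) prime_order_cyclic:
  assumes p: "Factorial_Ring.prime p" and ord: "order G = p"
  shows "cyclic_group G"
proof -
  have fin: "finite (carrier G)" using ord p order_gt_0_iff_finite prime_gt_0_nat by metis
  have "card (carrier G) \<ge> 2" using ord p prime_ge_2_nat by (simp add: order_def)
  have "\<not> carrier G \<subseteq> {\<one>}"
  proof
    assume "carrier G \<subseteq> {\<one>}"
    then have "card (carrier G) \<le> card {\<one>}" by (rule card_mono[rotated]) simp
    then show False using \<open>card (carrier G) \<ge> 2\<close> by simp
  qed
  then obtain y where y: "y \<in> carrier G" "y \<noteq> \<one>" by blast
  have "ord y dvd p" using ord_dvd_group_order[OF y(1)] ord by simp
  moreover have "ord y \<noteq> 1" using ord_eq_1[OF y(1)] y(2) by simp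
  ultimately have "ord y = p" using p by (metis prime_nat_iff)
  then have "card (generate G {y}) = order G" using generate_pow_card[OF y(1)] ord by simp
  then have "generate G {y} = carrier G" using subgroup_full[OF fin generate_is_subgroup] y(1) by auto
  then have "subgroup_generated G {y} = G" unfolding subgroup_generated_def using y(1) by simp
  then show ?thesis unfolding cyclic_group_def using y(1) by blast
qed

locale p3grp = group G for G (structure) +
  fixes p :: nat
  assumes pr: "Factorial_Ring.prime p" and fin: "finite (carrier G)"
    and ord3: "order G = p^3" and nonab: "\<not> comm_group G"
begin

lemma Zc_ne: "Zc G \<noteq> carrier G"
  using nonab group_comm_groupI by (auto simp: Zc_def)

lemma cardZ: "card (Zc G) = p"
proof -
  obtain i where i: "1 \<le> i" "i \<le> 3" "card (Zc G) = p^i" using Zc_card_pos[OF fin pr ord3] by auto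
  have "i \<noteq> 3"
  proof
    assume "i = 3"
    then show False using subgroup_full[OF fin Zc_subgroup] i ord3 Zc_ne by simp
  qed
  moreover have "i \<noteq> 2"
  proof
    assume "i = 2"
    have "order G = p^(Suc 2)" using ord3 by simp
    then show False using Zc_big_full[OF fin pr] i \<open>i = 2\<close> Zc_ne by blast
  qed
  ultimately have "i = 1" using i by auto
  then show ?thesis using i by simp
qed

lemma finZ: "finite (Zc G)"
  using fin finite_subset Zc_subgroup subgroup.subset by blast

lemma comm_mod:
  assumes g: "g \<in> carrier G" and h: "h \<in> carrier G"
  shows "\<exists>z\<in>Zc G. g \<otimes> h = z \<otimes> (h \<otimes> g)"
proof -
  interpret N: normal "Zc G" G by (rule Zc_normal)
  interpret Q: group "G Mod Zc G" by (rule N.factorgroup_is_group)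
  have cQ: "carrier (G Mod Zc G) = rcosets (Zc G)" by (simp add: FactGroup_def)
  have "card (rcosets (Zc G)) * p = p^3" using lagrange[OF Zc_subgroup] cardZ ord3 by simp
  then have "card (rcosets (Zc G)) * p = p^2 * p" by (simp add: power_Suc2 numeral_3_eq_3 numeral_2_eq_2 del: mult_cancel2)
  then have "card (rcosets (Zc G)) = p^2" using prime_gt_0_nat[OF pr] by simp
  then have oQ: "order (G Mod Zc G) = p^2" by (simp add: order_def cQ)
  have finQ: "finite (carrier (G Mod Zc G))" unfolding cQ RCOSETS_def using fin by simp
  have cg: "comm_group (G Mod Zc G)" using Q.order_p2_comm[OF finQ pr oQ] .
  have gc: "Zc G #> g \<in> carrier (G Mod Zc G)" "Zc G #> h \<in> carrier (G Mod Zc G)"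
    unfolding cQ using rcosetsI[OF subgroup.subset[OF Zc_subgroup]] g h by auto
  have "(Zc G #> g) <#> (Zc G #> h) = (Zc G #> h) <#> (Zc G #> g)"
    using comm_monoid.m_comm[OF comm_group.axioms(1)[OF cg] gc] by simp
  then have "Zc G #> (g \<otimes> h) = Zc G #> (h \<otimes> g)" using N.rcos_sum g h by simp
  moreover have "g \<otimes> h \<in> Zc G #> (g \<otimes> h)" using rcos_self[OF m_closed[OF g h] Zc_subgroup] .
  ultimately have "g \<otimes> h \<in> Zc G #> (h \<otimes> g)" by simp
  then show ?thesis unfolding r_coset_def by blast
qed

end


context p3grp
begin

lemma conj_pow:
  assumes g: "g \<in> carrier G" and x: "x \<in> carrier G"
  shows "g \<otimes> (x [^] (k::nat)) \<otimes> inv g = (g \<otimes> x \<otimes> inv g) [^] k"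
proof (induction k)
  case 0 then show ?case using g by simp
next
  case (Suc k)
  have e1: "x [^] Suc k = x [^] k \<otimes> (inv g \<otimes> g) \<otimes> x" using g x by simp
  have "g \<otimes> (x [^] Suc k) \<otimes> inv g = (g \<otimes> (x [^] k) \<otimes> inv g) \<otimes> (g \<otimes> x \<otimes> inv g)"
    unfolding e1 by (simp only: m_assoc g x nat_pow_closed inv_closed m_closed)
  also have "\<dots> = (g \<otimes> x \<otimes> inv g) [^] Suc k" using Suc by simp
  finally show ?case .
qed

lemma cyc_comm:
  assumes x: "x \<in> carrier G" and c: "card (generate G {x}) = order G"
  shows False
proof -
  have "generate G {x} = carrier G" using subgroup_full[OF fin generate_is_subgroup] x c by auto
  then have "carrier G = {x [^] (k::int) | k. k \<in> UNIV}" using generate_pow[OF x] by simp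
  then have "comm_group G"
    by (intro group_comm_groupI) (auto simp: x simp flip: int_pow_mult add.commute)
  then show False using nonab by simp
qed

lemma exponent:
  assumes nm: "\<not> metacyclic G" and x: "x \<in> carrier G"
  shows "x [^] p = \<one>"
proof -
  have "ord x dvd p^3" using ord_dvd_group_order[OF x] ord3 by simp
  then obtain i where i: "i \<le> 3" "ord x = p^i" using pr by (auto simp: divides_primepow_nat)
  have cN: "card (generate G {x}) = p^i" using generate_pow_card[OF x] i by simp
  have "i \<noteq> 3" using cyc_comm[OF x] cN ord3 by auto
  moreover have "i \<noteq> 2"
  proof
    assume i2: "i = 2"
    define N where "N = generate G {x}"
    have NS: "subgroup N G" unfolding N_def using x by (simp add: generate_is_subgroup)
    have cN2: "card N = p^2" using cN i2 N_def by simp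
    have xN: "x \<in> N" unfolding N_def by (rule generate.incl) simp
    have "N \<subseteq> cent G x" unfolding N_def
      by (rule generate_subgroup_incl) (use self_cent[OF x] cent_subgroup[OF x] in auto)
    have "N = cent G x"
    proof (rule ccontr)
      assume "N \<noteq> cent G x"
      then obtain j where j: "2 < j" "j \<le> 3" "card (cent G x) = p^j"
        using subgroup_card_less[OF fin pr ord3 NS cent_subgroup[OF x] \<open>N \<subseteq> cent G x\<close> _ cN2] by blast
      have "j = 3" using j by simp
      have "card (cent G x) = order G" using j(3) ord3 unfolding \<open>j = 3\<close> by simp
      then have "cent G x = carrier G" using subgroup_full[OF fin cent_subgroup[OF x]] by blast
      then have "x \<in> Zc G" using x by (auto simp: cent_def Zc_def)
      then have "N \<subseteq> Zc G" unfolding N_def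
        by (intro generate_subgroup_incl Zc_subgroup) auto
      then have "card N \<le> card (Zc G)" using finZ card_mono by blast
      then have "p^2 \<le> p" using cN2 cardZ by simp
      then show False using prime_gt_1_nat[OF pr]
        by (metis Suc_1 le_less_trans lessI less_le_not_le power_one_right power_strict_increasing)
    qed
    then have ZN: "Zc G \<subseteq> N" using Zc_cent[OF x] by simp
    have NN: "N \<lhd> G"
      unfolding normal_inv_iff
    proof (intro conjI NS ballI)
      fix g h assume g: "g \<in> carrier G" and h: "h \<in> N"
      have "ord x \<noteq> 0" using i prime_gt_0_nat[OF pr] by simp
      then obtain k :: nat where k: "h = x [^] k" using h generate_pow_nat[OF x] unfolding N_def by blast
      obtain z where z: "z \<in> Zc G" "g \<otimes> x = z \<otimes> (x \<otimes> g)" using comm_mod[OF g x] by blast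
      have zc: "z \<in> carrier G" using z(1) unfolding Zc_def by blast
      have "g \<otimes> x \<otimes> inv g = z \<otimes> x" using z(2) g x zc by (simp add: m_assoc)
      then have "g \<otimes> h \<otimes> inv g = (z \<otimes> x) [^] k" using conj_pow[OF g x] k by simp
      moreover have "z \<otimes> x \<in> N" using z(1) ZN xN NS by (auto intro: subgroup.m_closed)
      ultimately show "g \<otimes> h \<otimes> inv g \<in> N" using subgroup_int_pow_closed[OF NS, of "z \<otimes> x" "int k"] by (simp add: int_pow_int)
    qed
    have c1: "cyclic_group (G\<lparr>carrier := N\<rparr>)"
      using cyclic_group_generated[of x] x unfolding subgroup_generated_def N_def by simp
    interpret NQ: normal N G by (rule NN)
    interpret Q: group "G Mod N" by (rule NQ.factorgroup_is_group)
    have "card (rcosets N) * p^2 = p^3" using lagrange[OF NS] cN2 ord3 by simp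
    then have "card (rcosets N) * p^2 = p * p^2" by (simp add: power_Suc2 numeral_3_eq_3 numeral_2_eq_2 del: mult_cancel2)
    then have "card (rcosets N) = p" using prime_gt_0_nat[OF pr] by simp
    then have "order (G Mod N) = p" by (simp add: order_def FactGroup_def)
    then have c2: "cyclic_group (G Mod N)" using Q.prime_order_cyclic pr by blast
    have "metacyclic G" unfolding metacyclic_def by (intro exI[of _ N] conjI NN c1 c2)
    then show False using nm by simp
  qed
  ultimately have "i \<le> 1" using i by auto
  then have "ord x dvd p" using i by (cases i) auto
  then show ?thesis using pow_eq_id[OF x] by simp
qed

lemma p_odd:
  assumes nm: "\<not> metacyclic G"
  shows "odd p"
proof
  assume "even p"
  have "\<not> p > 2" using prime_odd_nat[OF pr] \<open>even p\<close> by blast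
  then have p2: "p = 2" using prime_ge_2_nat[OF pr] by simp
  have sq: "x \<otimes> x = \<one>" if "x \<in> carrier G" for x
    using exponent[OF nm that] p2 that by (simp add: numeral_2_eq_2)
  have "x \<otimes> y = y \<otimes> x" if x: "x \<in> carrier G" and y: "y \<in> carrier G" for x y
  proof -
    have "inv x = x" using sq[OF x] x by (simp add: inv_equality)
    moreover have "inv y = y" using sq[OF y] y by (simp add: inv_equality)
    moreover have "inv (x \<otimes> y) = x \<otimes> y" using sq[OF m_closed[OF x y]] x y by (simp add: inv_equality)
    ultimately show ?thesis using inv_mult_group[OF x y] by simp
  qed
  then have "comm_group G" by (rule group_comm_groupI)
  then show False using nonab by simp
qed

end


lemma (in group) zc_carrier: "w \<in> Zc G \<Longrightarrow> w \<in> carrier G"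
  unfolding Zc_def by blast

lemma (in group) zc_comm: "w \<in> Zc G \<Longrightarrow> y \<in> carrier G \<Longrightarrow> w \<otimes> y = y \<otimes> w"
  unfolding Zc_def by blast

lemma (in group) swap4:
  assumes c: "U \<in> carrier G" "V \<in> carrier G" "U' \<in> carrier G" "V' \<in> carrier G"
    and z: "Z1 \<in> Zc G" "Z2 \<in> Zc G" "W \<in> Zc G"
    and r: "V \<otimes> U' = U' \<otimes> V \<otimes> W"
  shows "(U \<otimes> V \<otimes> Z1) \<otimes> (U' \<otimes> V' \<otimes> Z2) = (U \<otimes> U') \<otimes> (V \<otimes> V') \<otimes> (W \<otimes> Z1 \<otimes> Z2)"
proof -
  note zc = zc_carrier[OF z(1)] zc_carrier[OF z(2)] zc_carrier[OF z(3)]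
  have c1: "Z1 \<otimes> (U' \<otimes> V' \<otimes> Z2) = (U' \<otimes> V' \<otimes> Z2) \<otimes> Z1"
    using zc_comm[OF z(1)] c zc by simp
  have c2: "W \<otimes> V' = V' \<otimes> W" using zc_comm[OF z(3)] c by simp
  have c3: "Z2 \<otimes> Z1 = Z1 \<otimes> Z2" using zc_comm[OF z(2)] zc by simp
  have "(U \<otimes> V \<otimes> Z1) \<otimes> (U' \<otimes> V' \<otimes> Z2) = U \<otimes> V \<otimes> (Z1 \<otimes> (U' \<otimes> V' \<otimes> Z2))"
    using c zc by (simp add: m_assoc)
  also have "\<dots> = U \<otimes> V \<otimes> ((U' \<otimes> V' \<otimes> Z2) \<otimes> Z1)" by (simp only: c1)
  also have "\<dots> = U \<otimes> (V \<otimes> U') \<otimes> V' \<otimes> Z2 \<otimes> Z1" using c zc by (simp add: m_assoc)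
  also have "\<dots> = U \<otimes> (U' \<otimes> V \<otimes> W) \<otimes> V' \<otimes> Z2 \<otimes> Z1" by (simp only: r)
  also have "\<dots> = U \<otimes> U' \<otimes> V \<otimes> (W \<otimes> V') \<otimes> Z2 \<otimes> Z1" using c zc by (simp add: m_assoc)
  also have "\<dots> = U \<otimes> U' \<otimes> V \<otimes> (V' \<otimes> W) \<otimes> Z2 \<otimes> Z1" by (simp only: c2)
  also have "\<dots> = (U \<otimes> U') \<otimes> (V \<otimes> V') \<otimes> (W \<otimes> (Z2 \<otimes> Z1))" using c zc by (simp add: m_assoc)
  also have "\<dots> = (U \<otimes> U') \<otimes> (V \<otimes> V') \<otimes> (W \<otimes> (Z1 \<otimes> Z2))" by (simp only: c3)
  also have "\<dots> = (U \<otimes> U') \<otimes> (V \<otimes> V') \<otimes> (W \<otimes> Z1 \<otimes> Z2)" using c zc by (simp add: m_assoc)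
  finally show ?thesis .
qed

lemma (in group) zc_pow: "w \<in> Zc G \<Longrightarrow> w [^] (i::int) \<in> Zc G"
  by (rule subgroup_int_pow_closed[OF Zc_subgroup])

lemma (in group) pow_cong_ord:
  assumes w: "w \<in> carrier G" and wp: "w [^] (p::nat) = \<one>" and c: "[i = j] (mod int p)"
  shows "w [^] (i::int) = w [^] j"
proof -
  have "ord w dvd p" using pow_eq_id[OF w] wp by simp
  moreover have "int p dvd (j - i)" using c by (simp add: cong_iff_dvd_diff dvd_diff_commute)
  ultimately have "int (ord w) dvd (j - i)" by (meson dvd_trans int_dvd_int_iff)
  then show ?thesis using int_pow_eq[OF w] by simp
qed


locale p3nm = p3grp + assumes nm: "\<not> metacyclic G"
begin

lemma exists_uvz:
  "\<exists>u v z. u \<in> carrier G \<and> v \<in> carrier G \<and> z \<in> Zc G \<and> u \<otimes> v \<noteq> v \<otimes> u \<and> v \<otimes> u = u \<otimes> v \<otimes> z"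
proof -
  have "\<not> (\<forall>x\<in>carrier G. \<forall>y\<in>carrier G. x \<otimes> y = y \<otimes> x)" using nonab group_comm_groupI by blast
  then obtain u v where uv: "u \<in> carrier G" "v \<in> carrier G" "u \<otimes> v \<noteq> v \<otimes> u" by blast
  obtain z where z: "z \<in> Zc G" "v \<otimes> u = z \<otimes> (u \<otimes> v)" using comm_mod[OF uv(2,1)] by blast
  have "v \<otimes> u = u \<otimes> v \<otimes> z" using z zc_comm[OF z(1), of "u \<otimes> v"] uv by simp
  then show ?thesis using uv z by blast
qed

end

locale p3uvz = p3nm +
  fixes u v z
  assumes u: "u \<in> carrier G" and v: "v \<in> carrier G" and zZ: "z \<in> Zc G"
    and nuv: "u \<otimes> v \<noteq> v \<otimes> u" and rel: "v \<otimes> u = u \<otimes> v \<otimes> z"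
begin

lemma z: "z \<in> carrier G" using zc_carrier[OF zZ] .

lemma zpow_comm: "y \<in> carrier G \<Longrightarrow> z [^] (n::nat) \<otimes> y = y \<otimes> z [^] n"
  using zc_comm[OF zc_pow[OF zZ, of "int n"]] by (simp add: int_pow_int)

lemma R1: "v [^] (n::nat) \<otimes> u = u \<otimes> v [^] n \<otimes> z [^] n"
proof (induction n)
  case 0 then show ?case using u by simp
next
  case (Suc n)
  have "v [^] Suc n \<otimes> u = v [^] n \<otimes> (v \<otimes> u)" using u v by (simp add: m_assoc)
  also have "\<dots> = v [^] n \<otimes> (u \<otimes> v \<otimes> z)" by (simp only: rel)
  also have "\<dots> = (v [^] n \<otimes> u) \<otimes> v \<otimes> z" using u v z by (simp add: m_assoc)
  also have "\<dots> = (u \<otimes> v [^] n \<otimes> z [^] n) \<otimes> v \<otimes> z" by (simp only: Suc)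
  also have "\<dots> = u \<otimes> v [^] n \<otimes> (z [^] n \<otimes> v) \<otimes> z" using u v z by (simp add: m_assoc)
  also have "\<dots> = u \<otimes> v [^] n \<otimes> (v \<otimes> z [^] n) \<otimes> z" using zpow_comm[OF v] by simp
  also have "\<dots> = u \<otimes> (v [^] n \<otimes> v) \<otimes> (z [^] n \<otimes> z)" using u v z by (simp add: m_assoc)
  also have "\<dots> = u \<otimes> v [^] Suc n \<otimes> z [^] Suc n" by simp
  finally show ?case .
qed

lemma R2: "v [^] (n::nat) \<otimes> u [^] (m::nat) = u [^] m \<otimes> v [^] n \<otimes> z [^] (m * n)"
proof (induction m)
  case 0 then show ?case using v by simp
next
  case (Suc m)
  have "v [^] n \<otimes> u [^] Suc m = (v [^] n \<otimes> u [^] m) \<otimes> u" using u v by (simp add: m_assoc)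
  also have "\<dots> = (u [^] m \<otimes> v [^] n \<otimes> z [^] (m * n)) \<otimes> u" by (simp only: Suc)
  also have "\<dots> = u [^] m \<otimes> v [^] n \<otimes> (z [^] (m * n) \<otimes> u)" using u v z by (simp add: m_assoc)
  also have "\<dots> = u [^] m \<otimes> v [^] n \<otimes> (u \<otimes> z [^] (m * n))" using zpow_comm[OF u] by simp
  also have "\<dots> = u [^] m \<otimes> (v [^] n \<otimes> u) \<otimes> z [^] (m * n)" using u v z by (simp add: m_assoc)
  also have "\<dots> = u [^] m \<otimes> (u \<otimes> v [^] n \<otimes> z [^] n) \<otimes> z [^] (m * n)" by (simp only: R1)
  also have "\<dots> = (u [^] m \<otimes> u) \<otimes> v [^] n \<otimes> (z [^] n \<otimes> z [^] (m * n))" using u v z by (simp add: m_assoc)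
  also have "\<dots> = u [^] Suc m \<otimes> v [^] n \<otimes> z [^] (Suc m * n)" using z by (simp add: nat_pow_mult)
  finally show ?case .
qed

lemma R2i:
  assumes "0 \<le> a" "0 \<le> b"
  shows "v [^] (b::int) \<otimes> u [^] (a::int) = u [^] a \<otimes> v [^] b \<otimes> z [^] (a * b)"
proof -
  have "v [^] (nat b) \<otimes> u [^] (nat a) = u [^] (nat a) \<otimes> v [^] (nat b) \<otimes> z [^] (nat a * nat b)" by (rule R2)
  moreover have "int (nat a * nat b) = a * b" using assms by simp
  ultimately show ?thesis using assms by (metis int_pow_int int_nat_eq)
qed

end


definition coordF :: "('a,'b) monoid_scheme \<Rightarrow> int \<Rightarrow> 'a \<Rightarrow> 'a \<Rightarrow> 'a \<Rightarrow> tri \<Rightarrow> 'a" where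
  "coordF G q u v z x = (case x of (a,b,c) \<Rightarrow>
     u [^]\<^bsub>G\<^esub> a \<otimes>\<^bsub>G\<^esub> v [^]\<^bsub>G\<^esub> b \<otimes>\<^bsub>G\<^esub> z [^]\<^bsub>G\<^esub> (c + ((q+1) div 2) * a * b))"

lemma cong_modI: "[t mod q = (t::int)] (mod q)"
  by (simp add: cong_def)

context p3uvz
begin

abbreviation "q \<equiv> int p"
abbreviation "Fc \<equiv> coordF G q u v z"

lemma podd: "odd p" using p_odd[OF nm] .

lemma h2: "2 * ((q+1) div 2) = q + 1"
  using podd by presburger

lemma expo: "w \<in> carrier G \<Longrightarrow> w [^] p = \<one>" using exponent[OF nm] by blast

lemma pc: "w \<in> carrier G \<Longrightarrow> [i = j] (mod q) \<Longrightarrow> w [^] (i::int) = w [^] j"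
  using pow_cong_ord expo by blast

lemma Fc_simp: "Fc (a,b,c) = u [^] a \<otimes> v [^] b \<otimes> z [^] (c + ((q+1) div 2) * a * b)"
  by (simp add: coordF_def)

lemma Fc_carrier: "Fc x \<in> carrier G"
  using u v z by (cases x) (simp add: coordF_def)

lemma Fc_hom:
  assumes x: "x \<in> TT q" and y: "y \<in> TT q"
  shows "Fc (sadd q x y) = Fc x \<otimes> Fc y"
proof -
  obtain a b c where xx: "x = (a,b,c)" by (cases x) auto
  obtain a2 b2 c2 where yy: "y = (a2,b2,c2)" by (cases y) auto
  have r: "0 \<le> a" "0 \<le> b" "0 \<le> a2" "0 \<le> b2" using x y TT_memD xx yy by auto
  define h where "h = (q+1) div 2"
  have hh: "2 * h = q + 1" using h2 h_def by simp
  have "Fc x \<otimes> Fc y = (u [^] a \<otimes> v [^] b \<otimes> z [^] (c + h * a * b)) \<otimes> (u [^] a2 \<otimes> v [^] b2 \<otimes> z [^] (c2 + h * a2 * b2))"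
    unfolding xx yy Fc_simp h_def ..
  also have "\<dots> = (u [^] a \<otimes> u [^] a2) \<otimes> (v [^] b \<otimes> v [^] b2) \<otimes> (z [^] (a2 * b) \<otimes> z [^] (c + h * a * b) \<otimes> z [^] (c2 + h * a2 * b2))"
    by (rule swap4) (use u v zZ zc_pow R2i r in auto)
  also have "\<dots> = u [^] (a + a2) \<otimes> v [^] (b + b2) \<otimes> z [^] (a2 * b + (c + h * a * b) + (c2 + h * a2 * b2))"
    using u v z by (simp add: int_pow_mult)
  finally have L: "Fc x \<otimes> Fc y = u [^] (a + a2) \<otimes> v [^] (b + b2) \<otimes> z [^] (a2 * b + (c + h * a * b) + (c2 + h * a2 * b2))" .
  have S: "sadd q x y = ((a+a2) mod q, (b+b2) mod q, (c+ c2+h*(a2*b - a*b2)) mod q)"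
    unfolding xx yy sadd_def h_def by simp
  have e1: "u [^] ((a+a2) mod q) = u [^] (a + a2)" using pc[OF u] cong_modI by blast
  have e2: "v [^] ((b+b2) mod q) = v [^] (b + b2)" using pc[OF v] cong_modI by blast
  define E1 where "E1 = (c+ c2+h*(a2*b - a*b2)) mod q + h * ((a+a2) mod q) * ((b+b2) mod q)"
  define P where "P = a2 * b + (c + h * a * b) + (c2 + h * a2 * b2)"
  have A: "[E1 = (c+ c2+h*(a2*b - a*b2)) + h * (a+a2) * (b+b2)] (mod q)"
    unfolding E1_def by (intro cong_add cong_mult cong_refl cong_modI)
  have B: "(c+ c2+h*(a2*b - a*b2)) + h * (a+a2) * (b+b2) = P + q * (a2 * b)"
  proof -
    have "(c+ c2+h*(a2*b - a*b2)) + h * (a+a2) * (b+b2) = (c + h * a * b) + (c2 + h * a2 * b2) + (2 * h) * (a2 * b)"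
      by (simp add: algebra_simps)
    also have "\<dots> = P + q * (a2 * b)"
      unfolding hh P_def by (simp add: algebra_simps)
    finally show ?thesis .
  qed
  have C: "[P + q * (a2 * b) = P] (mod q)" by (simp add: cong_def)
  have "[E1 = P] (mod q)" using cong_trans[OF A[unfolded B] C] .
  then have "[(c+ c2+h*(a2*b - a*b2)) mod q + h * ((a+a2) mod q) * ((b+b2) mod q) = a2 * b + (c + h * a * b) + (c2 + h * a2 * b2)] (mod q)"
    unfolding E1_def P_def .
  then have e3: "z [^] ((c+ c2+h*(a2*b - a*b2)) mod q + h * ((a+a2) mod q) * ((b+b2) mod q)) = z [^] (a2 * b + (c + h * a * b) + (c2 + h * a2 * b2))"
    using pc[OF z] by blast
  have "Fc (sadd q x y) = u [^] ((a+a2) mod q) \<otimes> v [^] ((b+b2) mod q) \<otimes> z [^] ((c+ c2+h*(a2*b - a*b2)) mod q + h * ((a+a2) mod q) * ((b+b2) mod q))"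
    unfolding S Fc_simp h_def by simp
  also have "\<dots> = Fc x \<otimes> Fc y" unfolding L e1 e2 e3 ..
  finally show ?thesis .
qed

end


context p3uvz
begin

lemma qprime: "Factorial_Ring.prime q" using pr by (simp add: prime_nat_int_transfer)

lemma pow_gen:
  assumes w: "w \<in> carrier G" and H: "subgroup H G" and wd: "w [^] (d::int) \<in> H" and nd: "\<not> q dvd d"
  shows "w \<in> H"
proof -
  have "coprime d q" using prime_imp_coprime_int[OF qprime nd] coprime_commute by blast
  then obtain e where e: "[d * e = 1] (mod q)" using cong_solve_coprime_int by blast
  have "(w [^] d) [^] e \<in> H" using subgroup_int_pow_closed[OF H wd] .
  moreover have "(w [^] d) [^] e = w" using int_pow_pow[OF w] pc[OF w e] w by simp
  ultimately show ?thesis by simp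
qed

lemma small_dvd: "0 \<le> a \<Longrightarrow> a < q \<Longrightarrow> q dvd a \<Longrightarrow> a = 0"
proof (rule ccontr)
  assume "0 \<le> a" "a < q" "q dvd a" "a \<noteq> 0"
  then have "q \<le> a" using zdvd_imp_le[of q a] by simp
  then show False using \<open>a < q\<close> by simp
qed

lemma u_notin_cent: "u \<notin> cent G v"
  using nuv unfolding cent_def by simp

lemma v_notin_Z: "v \<notin> Zc G"
proof
  assume "v \<in> Zc G"
  then have "v \<otimes> u = u \<otimes> v" using u unfolding Zc_def by blast
  then show False using nuv by simp
qed

lemma z_ne: "z \<noteq> \<one>"
proof
  assume "z = \<one>"
  then have "v \<otimes> u = u \<otimes> v" using rel u v by simp
  then show False using nuv by simp
qed

lemma ord_z: "ord z = p"
proof -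
  have "ord z dvd p" using pow_eq_id[OF z] expo[OF z] by simp
  moreover have "ord z \<noteq> 1" using ord_eq_1[OF z] z_ne by simp
  ultimately show ?thesis using pr by (metis prime_nat_iff)
qed

lemma Fc_kernel:
  assumes x: "x \<in> TT q" and e: "Fc x = \<one>"
  shows "x = (0,0,0)"
proof -
  obtain a b c where xx: "x = (a,b,c)" by (cases x) auto
  have r: "0 \<le> a" "a < q" "0 \<le> b" "b < q" "0 \<le> c" "c < q" using x TT_memD xx by auto
  define c1 where "c1 = c + ((q+1) div 2) * a * b"
  have e': "u [^] a \<otimes> (v [^] b \<otimes> z [^] c1) = \<one>" using e u v z unfolding xx Fc_simp c1_def by (simp add: m_assoc)
  then have ua: "u [^] a = inv (v [^] b \<otimes> z [^] c1)" using u v z by (metis inv_equality inv_comm int_pow_closed m_closed)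
  have "v [^] b \<otimes> z [^] c1 \<in> cent G v"
    using subgroup_int_pow_closed[OF cent_subgroup[OF v] self_cent[OF v]] Zc_cent[OF v] zc_pow[OF zZ]
      subgroup.m_closed[OF cent_subgroup[OF v]] by blast
  then have "u [^] a \<in> cent G v" using ua subgroup.m_inv_closed[OF cent_subgroup[OF v]] by simp
  then have "q dvd a" using pow_gen[OF u cent_subgroup[OF v]] u_notin_cent by blast
  then have a0: "a = 0" using small_dvd r by simp
  then have e2: "v [^] b \<otimes> z [^] c1 = \<one>" using e' v z by simp
  then have "v [^] b = inv (z [^] c1)" using v z by (metis inv_equality inv_comm int_pow_closed)
  then have "v [^] b \<in> Zc G" using zc_pow[OF zZ] subgroup.m_inv_closed[OF Zc_subgroup] by simp
  then have "q dvd b" using pow_gen[OF v Zc_subgroup] v_notin_Z by blast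
  then have b0: "b = 0" using small_dvd r by simp
  then have "z [^] c = \<one>" using e2 v z a0 unfolding c1_def by simp
  then have "int (ord z) dvd c" using int_pow_eq_id[OF z] by simp
  then have "c = 0" using small_dvd r ord_z by simp
  then show ?thesis using xx a0 b0 by simp
qed

definition negc :: "tri \<Rightarrow> tri" where
  "negc x = (case x of (a,b,c) \<Rightarrow> ((- a) mod q, (- b) mod q, (- c) mod q))"

lemma negc_TT: "negc x \<in> TT q"
  using prime_gt_0_nat[OF pr] by (cases x) (simp add: negc_def TT_def)

lemma sadd_negc: "x \<in> TT q \<Longrightarrow> sadd q x (negc x) = (0,0,0)"
proof -
  assume x: "x \<in> TT q"
  obtain a b c where xx: "x = (a,b,c)" by (cases x) auto
  have 1: "red q (sadd0 q (a,b,c) (-a, -b, -c)) = (0,0,0)" by (simp add: algebra_simps)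
  have 2: "sadd q x (negc x) = red q (sadd0 q (a,b,c) (red q (-a, -b, -c)))"
    unfolding xx sadd_def negc_def by simp
  show ?thesis unfolding 2 sadd0_red_r 1 ..
qed

lemma sadd_negc_eq:
  assumes x: "x \<in> TT q" and y: "y \<in> TT q" and e: "sadd q x (negc y) = (0,0,0)"
  shows "x = y"
proof -
  obtain a b c where xx: "x = (a,b,c)" by (cases x) auto
  obtain a2 b2 c2 where yy: "y = (a2,b2,c2)" by (cases y) auto
  have r: "0 \<le> a" "a < q" "0 \<le> b" "b < q" "0 \<le> c" "c < q" "0 \<le> a2" "a2 < q" "0 \<le> b2" "b2 < q" "0 \<le> c2" "c2 < q"
    using x y TT_memD xx yy by auto
  have "red q (sadd0 q (a,b,c) (red q (-a2, -b2, -c2))) = red q (0,0,0)"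
    using e unfolding xx yy sadd_def negc_def by simp
  then have "red q (sadd0 q (a,b,c) (-a2, -b2, -c2)) = red q (0,0,0)" using sadd0_red_r by metis
  then have h: "[a + - a2 = 0] (mod q)" "[b + - b2 = 0] (mod q)"
    "[c + - c2 + ((q+1) div 2) * (- a2 * b - a * - b2) = 0] (mod q)"
    unfolding sadd0.simps red_eq_iff by auto
  have "[a = a2] (mod q)" using h(1) by (simp add: cong_iff_dvd_diff)
  then have ea: "a = a2" using r by (intro cong_less_imp_eq_int) auto
  have "[b = b2] (mod q)" using h(2) by (simp add: cong_iff_dvd_diff)
  then have eb: "b = b2" using r by (intro cong_less_imp_eq_int) auto
  have "[c = c2] (mod q)" using h(3) unfolding ea eb by (simp add: cong_iff_dvd_diff algebra_simps)
  then have ec: "c = c2" using r by (intro cong_less_imp_eq_int) auto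
  show ?thesis using xx yy ea eb ec by simp
qed

lemma Fc_inj: "inj_on Fc (TT q)"
proof (rule inj_onI)
  fix x y assume x: "x \<in> TT q" and y: "y \<in> TT q" and e: "Fc x = Fc y"
  have "Fc (sadd q x (negc y)) = Fc (sadd q y (negc y))"
    using Fc_hom[OF x negc_TT] Fc_hom[OF y negc_TT] e by simp
  also have "\<dots> = \<one>" using sadd_negc[OF y] by (simp add: Fc_simp)
  finally have "sadd q x (negc y) = (0,0,0)" using Fc_kernel sadd_TT prime_gt_0_nat[OF pr] by simp
  then show "x = y" using sadd_negc_eq[OF x y] by simp
qed

lemma card_TT: "card (TT q) = p^3"
  by (simp add: TT_def card_cartesian_product power3_eq_cube)

lemma Fc_bij: "bij_betw Fc (TT q) (carrier G)"
proof -
  have sub: "Fc ` TT q \<subseteq> carrier G" using Fc_carrier by auto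
  have "card (Fc ` TT q) = p^3" using card_image[OF Fc_inj] card_TT by simp
  then have "Fc ` TT q = carrier G" using card_subset_eq[OF fin sub] ord3 by (simp add: order_def)
  then show ?thesis using Fc_inj by (simp add: bij_betw_def)
qed

end

lemma (in p3nm) coords:
  "odd p \<and> (\<exists>F. bij_betw F (TT (int p)) (carrier G) \<and>
      (\<forall>x\<in>TT (int p). \<forall>y\<in>TT (int p). F (sadd (int p) x y) = F x \<otimes> F y))"
proof -
  obtain u v z where uvz: "u \<in> carrier G" "v \<in> carrier G" "z \<in> Zc G" "u \<otimes> v \<noteq> v \<otimes> u" "v \<otimes> u = u \<otimes> v \<otimes> z"
    using exists_uvz by blast
  interpret U: p3uvz G p u v z by unfold_locales (use uvz in auto)
  show ?thesis using U.podd U.Fc_bij U.Fc_hom by blast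
qed


definition NR :: "('g, 'x) monoid_scheme \<Rightarrow> int \<Rightarrow> (tri \<Rightarrow> 'g) \<Rightarrow> nat \<times> bool \<Rightarrow> 'g ring" where
  "NR G q F A = \<lparr>carrier = carrier G,
     monoid.mult = (\<lambda>a b. F (mu q (fst A) (snd A) (inv_into (TT q) F a) (inv_into (TT q) F b))),
     monoid.one = F (1,0,0), ring.zero = \<one>\<^bsub>G\<^esub>, ring.add = (\<otimes>\<^bsub>G\<^esub>)\<rparr>"

lemma group_trunc: "group G \<Longrightarrow> group \<lparr>carrier = carrier G, monoid.mult = monoid.mult G, monoid.one = monoid.one G, \<dots> = m\<rparr>"
  unfolding group_def group_axioms_def monoid_def Units_def by simp

lemma inv_trunc: "m_inv \<lparr>carrier = carrier G, monoid.mult = monoid.mult G, monoid.one = monoid.one G, \<dots> = m\<rparr> x = m_inv G x"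
  unfolding m_inv_def by simp

locale coordsys = group G for G (structure) +
  fixes q :: int and F :: "tri \<Rightarrow> 'a"
  assumes qp: "Factorial_Ring.prime q" "odd q" and bij: "bij_betw F (TT q) (carrier G)"
    and hom: "\<And>x y. x \<in> TT q \<Longrightarrow> y \<in> TT q \<Longrightarrow> F (sadd q x y) = F x \<otimes> F y"
begin

abbreviation "Fi \<equiv> inv_into (TT q) F"

lemma q1: "q > 1" using qp prime_gt_1_int by blast
lemma q0: "q > 0" using q1 by simp
lemma FT: "x \<in> TT q \<Longrightarrow> F x \<in> carrier G" using bij bij_betwE by blast
lemma FiT: "y \<in> carrier G \<Longrightarrow> Fi y \<in> TT q" using bij_betw_inv_into[OF bij] bij_betwE by blast
lemma Fi_F: "x \<in> TT q \<Longrightarrow> Fi (F x) = x" using bij bij_betw_inv_into_left by fast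
lemma F_Fi: "y \<in> carrier G \<Longrightarrow> F (Fi y) = y" using bij bij_betw_inv_into_right by fast
lemma Finj: "x \<in> TT q \<Longrightarrow> y \<in> TT q \<Longrightarrow> F x = F y \<Longrightarrow> x = y"
  using bij by (auto simp: bij_betw_def inj_on_def)
lemma eT: "(1,0,0) \<in> TT q" using q1 by (simp add: TT_def)
lemma zT: "(0,0,0) \<in> TT q" using q1 by (simp add: TT_def)

lemma F0: "F (0,0,0) = \<one>"
proof -
  have "sadd q (0,0,0) (0,0,0) = (0,0,0)" by (simp add: sadd_def)
  then have "F (0,0,0) \<otimes> F (0,0,0) = F (0,0,0)" using hom[OF zT zT] by simp
  then show ?thesis using FT[OF zT] by (metis l_one one_closed right_cancel)
qed

context
  fixes k :: nat and s :: bool assumes ks: "s \<longrightarrow> k = 2"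
begin

abbreviation "R \<equiv> NR G q F (k,s)"

lemma R_simps: "carrier R = carrier G" "ring.add R = monoid.mult G" "ring.zero R = \<one>" "monoid.one R = F (1,0,0)"
  "monoid.mult R a b = F (mu q k s (Fi a) (Fi b))"
  by (simp_all add: NR_def)

lemma R_mult_F: "x \<in> TT q \<Longrightarrow> y \<in> TT q \<Longrightarrow> F x \<otimes>\<^bsub>R\<^esub> F y = F (mu q k s x y)"
  by (simp add: R_simps Fi_F)

lemma add_monoid_R: "add_monoid R = \<lparr>carrier = carrier G, monoid.mult = monoid.mult G, monoid.one = monoid.one G, \<dots> = undefined\<rparr>"
  by (simp add: R_simps)

lemma R_mclosed: "a \<in> carrier G \<Longrightarrow> b \<in> carrier G \<Longrightarrow> a \<otimes>\<^bsub>R\<^esub> b \<in> carrier G"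
  by (simp add: R_simps FT mu_TT q0)

lemma R_assoc: "a \<in> carrier G \<Longrightarrow> b \<in> carrier G \<Longrightarrow> c \<in> carrier G \<Longrightarrow>
   (a \<otimes>\<^bsub>R\<^esub> b) \<otimes>\<^bsub>R\<^esub> c = a \<otimes>\<^bsub>R\<^esub> (b \<otimes>\<^bsub>R\<^esub> c)"
  by (simp add: R_simps Fi_F mu_TT q0 mu_assoc[OF ks])

lemma R_ldist: "a \<in> carrier G \<Longrightarrow> b \<in> carrier G \<Longrightarrow> c \<in> carrier G \<Longrightarrow>
   a \<otimes>\<^bsub>R\<^esub> (b \<otimes> c) = (a \<otimes>\<^bsub>R\<^esub> b) \<otimes> (a \<otimes>\<^bsub>R\<^esub> c)"
proof -
  assume a: "a \<in> carrier G" and b: "b \<in> carrier G" and c: "c \<in> carrier G"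
  have "b \<otimes> c = F (sadd q (Fi b) (Fi c))" using hom[OF FiT[OF b] FiT[OF c]] F_Fi b c by simp
  then have "a \<otimes>\<^bsub>R\<^esub> (b \<otimes> c) = F (mu q k s (Fi a) (sadd q (Fi b) (Fi c)))"
    by (simp add: R_simps Fi_F sadd_TT q0)
  also have "\<dots> = F (sadd q (mu q k s (Fi a) (Fi b)) (mu q k s (Fi a) (Fi c)))" by (simp add: mu_ldist)
  also have "\<dots> = (a \<otimes>\<^bsub>R\<^esub> b) \<otimes> (a \<otimes>\<^bsub>R\<^esub> c)" using hom mu_TT q0 by (simp add: R_simps)
  finally show ?thesis .
qed

lemma R_monoid: "monoid R"
proof (rule monoidI)
  show "\<one>\<^bsub>R\<^esub> \<in> carrier R" using FT[OF eT] by (simp add: R_simps)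
  fix x y z assume x: "x \<in> carrier R" and y: "y \<in> carrier R" and z: "z \<in> carrier R"
  show "x \<otimes>\<^bsub>R\<^esub> y \<in> carrier R" using R_mclosed x y by (simp add: R_simps(1))
  show "x \<otimes>\<^bsub>R\<^esub> y \<otimes>\<^bsub>R\<^esub> z = x \<otimes>\<^bsub>R\<^esub> (y \<otimes>\<^bsub>R\<^esub> z)" using R_assoc x y z by (simp add: R_simps(1))
  show "\<one>\<^bsub>R\<^esub> \<otimes>\<^bsub>R\<^esub> x = x" using x FiT F_Fi mu_one_l by (simp add: R_simps Fi_F[OF eT])
  show "x \<otimes>\<^bsub>R\<^esub> \<one>\<^bsub>R\<^esub> = x" using x FiT F_Fi mu_one_r by (simp add: R_simps Fi_F[OF eT])
qed

lemma R_nearring: "nearring R"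
  unfolding nearring_def
proof (intro conjI ballI)
  show "group (add_monoid R)" unfolding add_monoid_R by (rule group_trunc) (rule is_group)
  fix x y z assume x: "x \<in> carrier R" and y: "y \<in> carrier R" and z: "z \<in> carrier R"
  show "x \<otimes>\<^bsub>R\<^esub> y \<in> carrier R" using R_mclosed x y by (simp add: R_simps(1))
  show "x \<otimes>\<^bsub>R\<^esub> y \<otimes>\<^bsub>R\<^esub> z = x \<otimes>\<^bsub>R\<^esub> (y \<otimes>\<^bsub>R\<^esub> z)" using R_assoc x y z by (simp add: R_simps(1))
  show "x \<otimes>\<^bsub>R\<^esub> (y \<oplus>\<^bsub>R\<^esub> z) = x \<otimes>\<^bsub>R\<^esub> y \<oplus>\<^bsub>R\<^esub> x \<otimes>\<^bsub>R\<^esub> z"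
    using R_ldist x y z by (simp add: R_simps(1,2))
qed

lemma units_R: "x \<in> TT q \<Longrightarrow> F x \<in> Units R \<longleftrightarrow> fst x \<noteq> 0"
proof
  assume x: "x \<in> TT q" and U: "F x \<in> Units R"
  then obtain y' where y': "y' \<in> carrier G" "y' \<otimes>\<^bsub>R\<^esub> F x = \<one>\<^bsub>R\<^esub>"
    unfolding Units_def by (auto simp: R_simps)
  have "F (mu q k s (Fi y') x) = F (1,0,0)" using y' x by (simp add: R_simps Fi_F)
  then have "mu q k s (Fi y') x = (1,0,0)" using Finj mu_TT q0 eT by blast
  then show "fst x \<noteq> 0" by (cases x, cases "Fi y'") (auto simp: mu_def)
next
  assume x: "x \<in> TT q" and nz: "fst x \<noteq> 0"
  have inj: "inj_on (mu q k s x) (TT q)" using mu_inj[OF qp(1) x nz] .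
  have "mu q k s x ` TT q = TT q"
    by (rule endo_inj_surj[OF finite_TT _ inj]) (auto simp: mu_TT q0)
  then obtain y where y: "y \<in> TT q" "mu q k s x y = (1,0,0)" using eT by (metis imageE)
  have "mu q k s x (mu q k s y x) = mu q k s x (1,0,0)"
    using mu_assoc[OF ks, of q x y x, symmetric] y mu_one_l[OF x] mu_one_r[OF x] by simp
  then have yx: "mu q k s y x = (1,0,0)" using inj mu_TT q0 eT by (auto simp: inj_on_def)
  have i1: "F y \<otimes>\<^bsub>R\<^esub> F x = \<one>\<^bsub>R\<^esub>" and i2: "F x \<otimes>\<^bsub>R\<^esub> F y = \<one>\<^bsub>R\<^esub>"
    using R_mult_F[OF y(1) x] R_mult_F[OF x y(1)] yx y(2) by (simp_all add: R_simps(4))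
  show "F x \<in> Units R" unfolding Units_def R_simps(1) using FT[OF x] FT[OF y(1)] i1 i2 by blast
qed

lemma nonunits_R: "carrier R - Units R = F ` {x \<in> TT q. fst x = 0}"
proof
  show "carrier R - Units R \<subseteq> F ` {x \<in> TT q. fst x = 0}"
  proof
    fix a assume a: "a \<in> carrier R - Units R"
    then have ac: "a \<in> carrier G" by (simp add: R_simps)
    have "F (Fi a) \<notin> Units R" using a F_Fi[OF ac] by simp
    then have "fst (Fi a) = 0" using units_R FiT[OF ac] by blast
    then show "a \<in> F ` {x \<in> TT q. fst x = 0}" using FiT[OF ac] F_Fi[OF ac] by force
  qed
next
  show "F ` {x \<in> TT q. fst x = 0} \<subseteq> carrier R - Units R"
    using units_R FT by (auto simp: R_simps(1))
qed

lemma R_local: "local_nearring R"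
  unfolding local_nearring_def nearring_with_identity_def
proof (intro conjI R_nearring R_monoid)
  let ?L = "{x \<in> TT q. fst x = 0}"
  have sub: "subgroup (F ` ?L) G"
  proof (rule subgroupI)
    show "F ` ?L \<subseteq> carrier G" using FT by auto
    show "F ` ?L \<noteq> {}" using zT by auto
    fix a b assume a: "a \<in> F ` ?L" and b: "b \<in> F ` ?L"
    then obtain x y where x: "x \<in> TT q" "fst x = 0" "a = F x" and y: "y \<in> TT q" "fst y = 0" "b = F y" by auto
    have "a \<otimes> b = F (sadd q x y)" using hom x y by simp
    moreover have "fst (sadd q x y) = 0" using x y by (cases x, cases y) (simp add: sadd_def)
    ultimately show "a \<otimes> b \<in> F ` ?L" using sadd_TT q0 by blast
    obtain x2 x3 where xx: "x = (0,x2,x3)" using x by (cases x) auto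
    define nx where "nx = (0::int, (- x2) mod q, (- x3) mod q)"
    have nxT: "nx \<in> TT q" using q0 by (simp add: nx_def TT_def)
    have "sadd q x nx = (0,0,0)" unfolding xx nx_def sadd_def by (simp add: mod_simps)
    then have "a \<otimes> F nx = \<one>" using hom[OF x(1) nxT] x F0 by simp
    then have "inv a = F nx" using FT[OF x(1)] FT[OF nxT] x by (metis inv_equality inv_comm)
    then show "inv a \<in> F ` ?L" using nxT by (simp add: nx_def)
  qed
  show "subgroup (carrier R - Units R) (add_monoid R)"
    unfolding nonunits_R add_monoid_R subgroup_def
    using sub unfolding subgroup_def by (simp add: inv_trunc)
qed

lemma R_iso: "add_monoid R \<cong> G"
proof -
  have "(\<lambda>x. x) \<in> iso (add_monoid R) G"
    unfolding iso_def hom_def bij_betw_def by (simp add: add_monoid_R R_simps)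
  then show ?thesis unfolding is_iso_def by blast
qed

end

lemma iso_ciso:
  assumes ks: "s \<longrightarrow> k = 2" and ks': "s' \<longrightarrow> k' = 2"
    and I: "nearring_iso (NR G q F (k,s)) (NR G q F (k',s'))"
  shows "\<exists>g. ciso q (k,s) (k',s') g"
proof -
  obtain f where f: "bij_betw f (carrier G) (carrier G)"
    and fa: "\<And>x y. x \<in> carrier G \<Longrightarrow> y \<in> carrier G \<Longrightarrow> f (x \<otimes> y) = f x \<otimes> f y"
    and fm: "\<And>x y. x \<in> carrier G \<Longrightarrow> y \<in> carrier G \<Longrightarrow>
       f (x \<otimes>\<^bsub>NR G q F (k,s)\<^esub> y) = f x \<otimes>\<^bsub>NR G q F (k',s')\<^esub> f y"
    using I unfolding nearring_iso_def by (auto simp: R_simps[OF ks] R_simps[OF ks'])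
  define g where "g = (\<lambda>x. Fi (f (F x)))"
  have fT: "x \<in> carrier G \<Longrightarrow> f x \<in> carrier G" for x using f bij_betwE by blast
  have Fg: "x \<in> TT q \<Longrightarrow> F (g x) = f (F x)" for x unfolding g_def using F_Fi fT FT by blast
  have gT: "x \<in> TT q \<Longrightarrow> g x \<in> TT q" for x unfolding g_def using FiT fT FT by blast
  have "bij_betw (Fi \<circ> (f \<circ> F)) (TT q) (TT q)"
    by (rule bij_betw_trans[OF bij_betw_trans[OF bij f] bij_betw_inv_into[OF bij]])
  then have gb: "bij_betw g (TT q) (TT q)" unfolding g_def by (simp add: comp_def)
  show ?thesis unfolding ciso_def
  proof (intro exI[of _ g] conjI gb ballI)
    fix x y assume x: "x \<in> TT q" and y: "y \<in> TT q"
    have "g (sadd q x y) = Fi (f (F x \<otimes> F y))" unfolding g_def using hom x y by simp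
    also have "\<dots> = Fi (F (g x) \<otimes> F (g y))" using fa FT x y Fg by simp
    also have "\<dots> = sadd q (g x) (g y)" using hom[OF gT[OF x] gT[OF y], symmetric] Fi_F[OF sadd_TT[OF q0]] by simp
    finally show "g (sadd q x y) = sadd q (g x) (g y)" .
    have "g (mu q (fst (k,s)) (snd (k,s)) x y) = Fi (f (F x \<otimes>\<^bsub>NR G q F (k,s)\<^esub> F y))"
      unfolding g_def using R_mult_F[OF ks x y] by simp
    also have "\<dots> = Fi (F (g x) \<otimes>\<^bsub>NR G q F (k',s')\<^esub> F (g y))" using fm FT x y Fg by simp
    also have "\<dots> = mu q (fst (k',s')) (snd (k',s')) (g x) (g y)"
      using R_mult_F[OF ks' gT[OF x] gT[OF y]] Fi_F mu_TT q0 by simp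
    finally show "g (mu q (fst (k,s)) (snd (k,s)) x y) = mu q (fst (k',s')) (snd (k',s')) (g x) (g y)" .
  qed
qed

end


lemma par_ks: "snd (par p i) \<longrightarrow> fst (par p i) = 2"
  by (simp add: par_def)

theorem theorem2:
  fixes G :: "('g, 'x) monoid_scheme" and p :: nat
  assumes "Factorial_Ring.prime p"
    and "group G"
    and "finite (carrier G)"
    and "order G = p ^ 3"
    and "\<not> comm_group G"
    and "\<not> metacyclic G"
  shows "\<exists>N :: nat \<Rightarrow> 'g ring.
           (\<forall>i < p + 1. local_nearring (N i) \<and> add_monoid (N i) \<cong> G) \<and>
           (\<forall>i < p + 1. \<forall>j < p + 1. i \<noteq> j \<longrightarrow> \<not> nearring_iso (N i) (N j))"
proof -
  have "p3nm G p" by (intro p3nm.intro p3grp.intro p3grp_axioms.intro p3nm_axioms.intro assms)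
  then interpret P: p3nm G p .
  obtain F where od: "odd p" and Fb: "bij_betw F (TT (int p)) (carrier G)"
    and Fh: "\<forall>x\<in>TT (int p). \<forall>y\<in>TT (int p). F (sadd (int p) x y) = F x \<otimes>\<^bsub>G\<^esub> F y"
    using P.coords by blast
  have qp: "Factorial_Ring.prime (int p)" "odd (int p)" using assms(1) od by (auto simp: prime_nat_int_transfer)
  have "coordsys G (int p) F" by (intro coordsys.intro coordsys_axioms.intro assms(2) qp Fb) (use Fh in auto)
  then interpret C: coordsys G "int p" F .
  define N where "N = (\<lambda>i. NR G (int p) F (par p i))"
  show ?thesis
  proof (intro exI[of _ N] conjI allI impI)
    fix i assume "i < p + 1"
    obtain k s where ks: "par p i = (k,s)" by (cases "par p i") auto
    have "s \<longrightarrow> k = 2" using par_ks[of p i] ks by simp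
    then show "local_nearring (N i)"
      using C.R_local ks unfolding N_def by simp
  next
    fix i assume "i < p + 1"
    obtain k s where ks: "par p i = (k,s)" by (cases "par p i") auto
    have "s \<longrightarrow> k = 2" using par_ks[of p i] ks by simp
    then show "add_monoid (N i) \<cong> G"
      using C.R_iso ks unfolding N_def by simp
  next
    fix i j assume i: "i < p + 1" and j: "j < p + 1" and ij: "i \<noteq> j"
    show "\<not> nearring_iso (N i) (N j)"
    proof
      assume I: "nearring_iso (N i) (N j)"
      obtain k s where ks: "par p i = (k,s)" by (cases "par p i") auto
      obtain k' s' where ks': "par p j = (k',s')" by (cases "par p j") auto
      have a: "s \<longrightarrow> k = 2" using par_ks[of p i] ks by simp
      have b: "s' \<longrightarrow> k' = 2" using par_ks[of p j] ks' by simp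
      obtain g where "ciso (int p) (k,s) (k',s') g"
        using C.iso_ciso[OF a b] I ks ks' unfolding N_def by auto
      then have "ciso (int p) (par p i) (par p j) g" using ks ks' by simp
      then show False using ciso_par[OF assms(1) od _ _ ij] i j by simp
    qed
  qed
qed


end
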